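(* Let $\omega\in\{0,1\}^{\mathbb N}$ be a nonsingular Sturmian word and let $p\in\beta\mathbb N$ be an idempotent ultrafilter. Then $p^*(\omega)=\omega$.
   Context: A Sturmian word is an infinite word over $\{0,1\}$ having exactly $k+1$ distinct factors of length $k$ for every $k\ge0$. With $T$ the shift and $\Omega$ the shift-orbit closure of $\omega$, the characteristic word $\tilde\omega$ is the unique element of $\Omega$ all of whose prefixes $v$ are left special ($0v$ and $1v$ both factors of $\omega$); $\omega$ is singular if $T^n(\omega)=\tilde\omega$ for some $n\ge1$, nonsingular otherwise. For a nonempty finite word $u$, $\omega|_u=\{n\in\mathbb N:\omega_n\cdots\omega_{n+|u|-1}=u\}$. $\beta\mathbb N$ is the set of ultrafilters on $\mathbb N$ with addition $A\in p+q$ iff $\{n:A-n\in p\}\in q$ ($A-n=\{m:m+n\in A\}$); an idempotent ultrafilter is a non-principal $p$ with $p+p=p$. For $p\in\beta\mathbb N$, $p^*(\omega)$ is the unique infinite word such that a finite word $u$ is a prefix of $p^*(\omega)$ iff $\omega|_u\in p$. *)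

theory Defs
  imports Main
begin

text \<open>Infinite words over the alphabet {0,1} are functions nat => nat taking values in {0,1}.
  Positions are indexed from 0.\<close>

definition binary_word :: "(nat \<Rightarrow> nat) \<Rightarrow> bool" where
  "binary_word w \<longleftrightarrow> (\<forall>n. w n \<in> {0, 1})"

definition factor_at :: "(nat \<Rightarrow> nat) \<Rightarrow> nat \<Rightarrow> nat \<Rightarrow> nat list" where
  "factor_at w i k = map w [i..<i + k]"

definition factors :: "(nat \<Rightarrow> nat) \<Rightarrow> nat \<Rightarrow> nat list set" where
  "factors w k = {factor_at w i k | i. True}"

definition is_factor :: "nat list \<Rightarrow> (nat \<Rightarrow> nat) \<Rightarrow> bool" where
  "is_factor u w \<longleftrightarrow> (\<exists>i. factor_at w i (length u) = u)"

definition sturmian :: "(nat \<Rightarrow> nat) \<Rightarrow> bool" where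
  "sturmian w \<longleftrightarrow> binary_word w \<and> (\<forall>k. card (factors w k) = k + 1)"

definition shift :: "(nat \<Rightarrow> nat) \<Rightarrow> (nat \<Rightarrow> nat)" where
  "shift w = (\<lambda>n. w (Suc n))"

definition is_prefix :: "nat list \<Rightarrow> (nat \<Rightarrow> nat) \<Rightarrow> bool" where
  "is_prefix u x \<longleftrightarrow> map x [0..<length u] = u"

text \<open>Shift-orbit closure of w in the product topology on {0,1}^N: the words all of
  whose prefixes are factors of w.\<close>
definition orbit_closure :: "(nat \<Rightarrow> nat) \<Rightarrow> (nat \<Rightarrow> nat) set" where
  "orbit_closure w = {x. \<forall>k. is_factor (map x [0..<k]) w}"

definition left_special :: "nat list \<Rightarrow> (nat \<Rightarrow> nat) \<Rightarrow> bool" where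
  "left_special v w \<longleftrightarrow> is_factor (0 # v) w \<and> is_factor (1 # v) w"

definition is_characteristic :: "(nat \<Rightarrow> nat) \<Rightarrow> (nat \<Rightarrow> nat) \<Rightarrow> bool" where
  "is_characteristic w x \<longleftrightarrow> x \<in> orbit_closure w \<and> (\<forall>k. left_special (map x [0..<k]) w)"

definition characteristic :: "(nat \<Rightarrow> nat) \<Rightarrow> (nat \<Rightarrow> nat)" where
  "characteristic w = (THE x. is_characteristic w x)"

definition singular :: "(nat \<Rightarrow> nat) \<Rightarrow> bool" where
  "singular w \<longleftrightarrow> (\<exists>n\<ge>1. (shift ^^ n) w = characteristic w)"

definition ultrafilter_on_nat :: "nat set set \<Rightarrow> bool" where
  "ultrafilter_on_nat p \<longleftrightarrow>
     UNIV \<in> p \<and> {} \<notin> p \<and>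
     (\<forall>A B. A \<in> p \<and> A \<subseteq> B \<longrightarrow> B \<in> p) \<and>
     (\<forall>A B. A \<in> p \<and> B \<in> p \<longrightarrow> A \<inter> B \<in> p) \<and>
     (\<forall>A. A \<in> p \<or> - A \<in> p)"

definition nonprincipal :: "nat set set \<Rightarrow> bool" where
  "nonprincipal p \<longleftrightarrow> (\<forall>n. {n} \<notin> p)"

definition minus_set :: "nat set \<Rightarrow> nat \<Rightarrow> nat set" where
  "minus_set A n = {m. m + n \<in> A}"

definition ultra_plus :: "nat set set \<Rightarrow> nat set set \<Rightarrow> nat set set" where
  "ultra_plus p q = {A. {n. minus_set A n \<in> p} \<in> q}"

definition idempotent_ultrafilter :: "nat set set \<Rightarrow> bool" where
  "idempotent_ultrafilter p \<longleftrightarrow> ultrafilter_on_nat p \<and> nonprincipal p \<and> ultra_plus p p = p"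

definition occurrences :: "(nat \<Rightarrow> nat) \<Rightarrow> nat list \<Rightarrow> nat set" where
  "occurrences w u = {n. factor_at w n (length u) = u}"

definition pstar :: "nat set set \<Rightarrow> (nat \<Rightarrow> nat) \<Rightarrow> (nat \<Rightarrow> nat)" where
  "pstar p w = (THE x. \<forall>u. u \<noteq> [] \<longrightarrow> (is_prefix u x \<longleftrightarrow> occurrences w u \<in> p))"

end

theory Submission
  imports Defs
begin

lemma factor_at_length[simp]: "length (factor_at w i k) = k"
  by (simp add: factor_at_def)

lemma factor_at_nth[simp]: "t < k \<Longrightarrow> factor_at w i k ! t = w (i + t)"
  by (simp add: factor_at_def)

lemma factor_at_eq_iff: "factor_at w i k = factor_at x j k \<longleftrightarrow> (\<forall>t<k. w (i+t) = x (j+t))"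
  by (auto simp: list_eq_iff_nth_eq)

lemma shift_pow: "(shift ^^ k) x = (\<lambda>n. x (n + k))"
  by (induction k arbitrary: x) (auto simp: shift_def funpow_Suc_right)

lemma factors_finite: 
  assumes "binary_word w" shows "finite (factors w k)"
proof -
  have "factors w k \<subseteq> {xs. set xs \<subseteq> {0,1} \<and> length xs = k}"
    using assms unfolding factors_def binary_word_def factor_at_def by (auto, metis less_numeral_extra(3))
  moreover have "finite {xs. set xs \<subseteq> {0::nat,1} \<and> length xs = k}"
    by (rule finite_lists_length_eq) simp
  ultimately show ?thesis by (rule finite_subset)
qed

definition lexl :: "(nat \<Rightarrow> nat) \<Rightarrow> (nat \<Rightarrow> nat) \<Rightarrow> bool" where
  "lexl x z \<longleftrightarrow> (\<exists>n. (\<forall>t<n. x t = z t) \<and> x n < z n)"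

lemma lexl_irrefl: "\<not> lexl x x" by (auto simp: lexl_def)

lemma lexl_first:
  assumes "lexl x z" obtains n where "\<forall>t<n. x t = z t" "x n < z n"
  using assms by (auto simp: lexl_def)

lemma lexl_trans: assumes "lexl x y" "lexl y z" shows "lexl x z"
proof -
  obtain n where n: "\<forall>t<n. x t = y t" "x n < y n" using assms(1) by (auto simp: lexl_def)
  obtain m where m: "\<forall>t<m. y t = z t" "y m < z m" using assms(2) by (auto simp: lexl_def)
  show ?thesis
  proof (cases "n < m")
    case True thus ?thesis using n m unfolding lexl_def by (intro exI[of _ n]) auto
  next
    case False
    hence "\<forall>t<m. x t = z t" "x m < z m" using n m
      by (auto, metis less_trans nat_neq_iff order_less_trans)
    thus ?thesis unfolding lexl_def by blast
  qed
qed

lemma lexl_total: assumes "x \<noteq> z" shows "lexl x z \<or> lexl z x"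
proof -
  obtain t0 where "x t0 \<noteq> z t0" using assms by auto
  define n where "n = (LEAST t. x t \<noteq> z t)"
  have "x n \<noteq> z n" unfolding n_def by (rule LeastI) fact
  moreover have "\<forall>t<n. x t = z t" unfolding n_def using not_less_Least by blast
  ultimately show ?thesis unfolding lexl_def by (metis nat_neq_iff)
qed

lemma lexl_asym: "lexl x z \<Longrightarrow> \<not> lexl z x"
  using lexl_trans lexl_irrefl by blast

definition cS where "cS a b c \<longleftrightarrow> (lexl a b \<and> lexl b c) \<or> (lexl b c \<and> lexl c a) \<or> (lexl c a \<and> lexl a b)"
definition le where "le a b \<longleftrightarrow> \<not> lexl b a"
definition cW where "cW a b c \<longleftrightarrow> (le a b \<and> le b c) \<or> (le b c \<and> le c a) \<or> (le c a \<and> le a b)"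

lemmas lexl_props = lexl_irrefl lexl_trans lexl_total lexl_asym

lemma cW_iff_not_cS: "cW a b c \<longleftrightarrow> \<not> cS a c b"
  unfolding cW_def cS_def le_def by (metis lexl_props)

lemma cS_rot: "cS a b c \<longleftrightarrow> cS b c a" unfolding cS_def by blast
lemma cW_rot: "cW a b c \<longleftrightarrow> cW b c a" unfolding cW_def by blast

lemma cS_imp_cW: "cS a b c \<Longrightarrow> cW a b c"
  unfolding cS_def cW_def le_def by (metis lexl_props)

lemma cS_distinct: "cS a b c \<Longrightarrow> a \<noteq> b \<and> b \<noteq> c \<and> a \<noteq> c"
  unfolding cS_def by (metis lexl_props)

lemma cW_distinct_cS: "cW a b c \<Longrightarrow> a \<noteq> b \<Longrightarrow> b \<noteq> c \<Longrightarrow> a \<noteq> c \<Longrightarrow> cS a b c"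
  unfolding cS_def cW_def le_def by (metis lexl_props)

lemma cS_asym: "cS a b c \<Longrightarrow> \<not> cS a c b"
  unfolding cS_def by (metis lexl_props)

lemma cW_both: "cW a b c \<Longrightarrow> cW b a c \<Longrightarrow> a = b \<or> b = c \<or> a = c"
  unfolding cW_def le_def by (metis lexl_props)

lemma cS_trans: "cS z a b \<Longrightarrow> cS z b c \<Longrightarrow> cS z a c"
  unfolding cS_def by (metis lexl_props)

lemma cS_four: "cS a x b \<Longrightarrow> cS b z a \<Longrightarrow> cS a x z \<and> cS x b z"
  unfolding cS_def by (metis lexl_props)


lemma two_fibers:
  assumes "finite A" "u1 \<noteq> u2" "u1 \<in> f ` A" "u2 \<in> f ` A"
    "card {a\<in>A. f a = u1} \<ge> 2" "card {a\<in>A. f a = u2} \<ge> 2"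
  shows "card A \<ge> card (f ` A) + 2"
proof -
  define c where "c b = card {a\<in>A. f a = b}" for b
  have cA: "card A = (\<Sum>b\<in>f ` A. c b)"
    unfolding c_def using sum.image_gen[OF assms(1), of "\<lambda>_. 1::nat" f] by simp
  have c1: "b \<in> f ` A \<Longrightarrow> c b \<ge> 1" for b
    unfolding c_def using assms(1) by (auto simp: Suc_le_eq card_gt_0_iff)
  have "(\<Sum>b\<in>f ` A. c b) = (\<Sum>b\<in>f ` A. 1 + (c b - 1))"
    using c1 by (intro sum.cong) force+
  also have "\<dots> = (\<Sum>b\<in>f ` A. (1::nat)) + (\<Sum>b\<in>f ` A. (c b - 1))" by (rule sum.distrib)
  also have "\<dots> = card (f ` A) + (\<Sum>b\<in>f ` A. (c b - 1))" by simp
  finally have eq: "card A = card (f ` A) + (\<Sum>b\<in>f ` A. (c b - 1))" using cA by simp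
  have "(\<Sum>b\<in>{u1,u2}. (c b - 1)) \<le> (\<Sum>b\<in>f ` A. (c b - 1))"
    using assms by (intro sum_mono2) auto
  moreover have "(\<Sum>b\<in>{u1,u2}. (c b - 1)) \<ge> 2" using assms unfolding c_def by simp
  ultimately show ?thesis using eq by linarith
qed

lemma take_factor_at: "j \<le> k \<Longrightarrow> take j (factor_at x i k) = factor_at x i j"
  by (simp add: factor_at_def take_map)

lemma factors_take: "take j ` factors x (Suc j) = factors x j"
proof -
  have "take j ` factors x (Suc j) = (\<lambda>i. take j (factor_at x i (Suc j))) ` UNIV"
    by (auto simp: factors_def)
  also have "\<dots> = (\<lambda>i. factor_at x i j) ` UNIV" by (simp add: take_factor_at)
  also have "\<dots> = factors x j" by (auto simp: factors_def)
  finally show ?thesis .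
qed

lemma factors_mono_card:
  assumes "binary_word x" shows "card (factors x j) \<le> card (factors x (Suc j))"
proof -
  have "factors x j = take j ` factors x (Suc j)" by (simp add: factors_take)
  thus ?thesis using card_image_le[OF factors_finite[OF assms]] by metis
qed

lemma factors_card_pos: "binary_word x \<Longrightarrow> card (factors x j) \<ge> 1"
proof -
  assume b: "binary_word x"
  have "factor_at x 0 j \<in> factors x j" by (auto simp: factors_def)
  hence "factors x j \<noteq> {}" by auto
  thus ?thesis using factors_finite[OF b, of j] by (simp add: Suc_le_eq card_gt_0_iff)
qed

lemma MH:
  assumes bx: "binary_word x" and K: "card (factors x K) \<le> K"
  shows "\<exists>B. \<forall>m. card (factors x m) \<le> B"
proof -
  have "\<exists>j<K. card (factors x (Suc j)) \<le> card (factors x j)"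
  proof (rule ccontr)
    assume "\<not> ?thesis"
    hence inc: "\<forall>j<K. card (factors x j) < card (factors x (Suc j))" by auto
    have "\<forall>j\<le>K. card (factors x j) \<ge> j + 1"
    proof (intro allI impI)
      fix j assume "j \<le> K" thus "card (factors x j) \<ge> j + 1"
        by (induction j) (use factors_card_pos[OF bx] inc in \<open>auto simp: Suc_le_eq\<close>)
    qed
    hence "card (factors x K) \<ge> K + 1" by simp
    thus False using K by simp
  qed
  then obtain j where j: "card (factors x (Suc j)) \<le> card (factors x j)" by blast
  have img: "take j ` factors x (Suc j) = factors x j" by (rule factors_take)
  have "card (take j ` factors x (Suc j)) = card (factors x (Suc j))"
    using j img factors_mono_card[OF bx, of j] by simp
  hence inj: "inj_on (take j) (factors x (Suc j))"
    by (rule eq_card_imp_inj_on[OF factors_finite[OF bx]])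
  have ext: "x (i + j) = x (i' + j)" if "factor_at x i j = factor_at x i' j" for i i'
  proof -
    have "take j (factor_at x i (Suc j)) = take j (factor_at x i' (Suc j))"
      using that by (simp add: factor_at_def take_map)
    moreover have "factor_at x i (Suc j) \<in> factors x (Suc j)" "factor_at x i' (Suc j) \<in> factors x (Suc j)"
      by (auto simp: factors_def)
    ultimately have "factor_at x i (Suc j) = factor_at x i' (Suc j)"
      using inj by (simp add: inj_on_def)
    hence "factor_at x i (Suc j) ! j = factor_at x i' (Suc j) ! j" by simp
    thus ?thesis by simp
  qed
  have det: "x (i + t) = x (i' + t)" if "factor_at x i j = factor_at x i' j" for i i' t
  proof (induction t rule: less_induct)
    case (less t)
    show ?case
    proof (cases "t < j")
      case True 
      have "factor_at x i j ! t = factor_at x i' j ! t" using that by simp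
      thus ?thesis using True by simp
    next
      case False
      have "factor_at x (i + (t - j)) j = factor_at x (i' + (t - j)) j"
        unfolding factor_at_eq_iff
      proof (intro allI impI)
        fix s assume "s < j"
        hence "t - j + s < t" using False by auto
        from less[OF this] show "x (i + (t - j) + s) = x (i' + (t - j) + s)" by (simp add: add.assoc)
      qed
      from ext[OF this] False show ?thesis by (simp add: add.assoc)
    qed
  qed
  have "card (factors x m) \<le> card (factors x j)" for m
  proof (cases "m \<le> j")
    case True
    thus ?thesis
    proof (induction j)
      case 0 thus ?case by simp
    next
      case (Suc j) thus ?case using factors_mono_card[OF bx, of j] by (auto simp: le_Suc_eq)
    qed
  next
    case False
    have "factors x m \<subseteq> (\<lambda>u. factor_at x (SOME i. factor_at x i j = u) m) ` factors x j"
    proof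
      fix v assume "v \<in> factors x m"
      then obtain i where i: "v = factor_at x i m" by (auto simp: factors_def)
      let ?u = "factor_at x i j"
      define i0 where "i0 = (SOME i'. factor_at x i' j = ?u)"
      have "\<exists>i'. factor_at x i' j = ?u" by blast
      hence e: "factor_at x i0 j = ?u" unfolding i0_def by (rule someI_ex)
      have "factor_at x i0 m = v" unfolding i factor_at_eq_iff using det[OF e] by simp
      hence "factor_at x (SOME i'. factor_at x i' j = ?u) m = v" unfolding i0_def .
      thus "v \<in> (\<lambda>u. factor_at x (SOME i. factor_at x i j = u) m) ` factors x j"
        by (auto simp: factors_def)
    qed
    hence "card (factors x m) \<le> card ((\<lambda>u. factor_at x (SOME i. factor_at x i j = u) m) ` factors x j)"
      by (intro card_mono) (auto simp: factors_finite[OF bx])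
    also have "\<dots> \<le> card (factors x j)" by (rule card_image_le[OF factors_finite[OF bx]])
    finally show ?thesis .
  qed
  thus ?thesis by blast
qed

locale sturm =
  fixes w :: "nat \<Rightarrow> nat"
  assumes st: "sturmian w"
begin

lemma bin: "binary_word w" using st by (simp add: sturmian_def)
lemma bin': "w n = 0 \<or> w n = 1" using bin by (auto simp: binary_word_def)
lemma cardF: "card (factors w k) = k + 1" using st by (simp add: sturmian_def)

lemma not_evper: assumes "a < b" shows "\<exists>n. w (n + a) \<noteq> w (n + b)"
proof (rule ccontr)
  assume "\<not> ?thesis"
  hence per: "w (n + a) = w (n + b)" for n by auto
  have red: "\<exists>k'<b. factor_at w k b = factor_at w k' b" for k
  proof (induction k rule: less_induct)
    case (less k)
    show ?case
    proof (cases "k < b")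
      case True thus ?thesis by blast
    next
      case False
      have "factor_at w k b = factor_at w (k - (b - a)) b"
        unfolding factor_at_eq_iff
      proof (intro allI impI)
        fix t assume "t < b"
        have e1: "(k - b + t) + a = k - (b - a) + t" using False assms by arith
        have e2: "(k - b + t) + b = k + t" using False by arith
        show "w (k + t) = w (k - (b - a) + t)" using per[of "k - b + t"] unfolding e1 e2 by (rule sym)
      qed
      moreover have "k - (b - a) < k" using False assms by auto
      then obtain k' where "k' < b" "factor_at w (k - (b - a)) b = factor_at w k' b" using less by blast
      ultimately show ?thesis by auto
    qed
  qed
  have "factors w b \<subseteq> (\<lambda>k. factor_at w k b) ` {..<b}"
  proof
    fix v assume "v \<in> factors w b"
    then obtain k where "v = factor_at w k b" by (auto simp: factors_def)
    with red[of k] show "v \<in> (\<lambda>k. factor_at w k b) ` {..<b}" by auto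
  qed
  hence "card (factors w b) \<le> b"
  proof -
    assume h: "factors w b \<subseteq> (\<lambda>k. factor_at w k b) ` {..<b}"
    have "card (factors w b) \<le> card ((\<lambda>k. factor_at w k b) ` {..<b})" by (rule card_mono[OF _ h]) simp
    also have "\<dots> \<le> b" using card_image_le[of "{..<b}"] by simp
    finally show ?thesis .
  qed
  thus False using cardF by simp
qed

lemma prefix_recur: "\<exists>s\<ge>1. factor_at w s K = factor_at w 0 K"
proof (rule ccontr)
  assume "\<not> ?thesis"
  hence nr: "s \<ge> 1 \<Longrightarrow> factor_at w s K \<noteq> factor_at w 0 K" for s by auto
  define x where "x = (\<lambda>n. w (Suc n))"
  have bx: "binary_word x" using bin by (auto simp: binary_word_def x_def)
  have fx: "factor_at x i m = factor_at w (Suc i) m" for i m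
    by (simp add: factor_at_eq_iff x_def)
  have "factors x K \<subseteq> factors w K - {factor_at w 0 K}"
  proof
    fix v assume "v \<in> factors x K"
    then obtain i where i: "v = factor_at x i K" unfolding factors_def by blast
    hence "v = factor_at w (Suc i) K" by (simp add: fx)
    moreover have "factor_at w (Suc i) K \<noteq> factor_at w 0 K" using nr[of "Suc i"] by simp
    ultimately show "v \<in> factors w K - {factor_at w 0 K}" unfolding factors_def by auto
  qed
  hence "card (factors x K) \<le> card (factors w K - {factor_at w 0 K})"
    by (intro card_mono) (auto simp: factors_finite[OF bin])
  also have "\<dots> = K"
  proof -
    have "factor_at w 0 K \<in> factors w K" unfolding factors_def by blast
    thus ?thesis using cardF[of K] factors_finite[OF bin, of K] by (simp add: card_Diff_singleton)
  qed
  finally have "card (factors x K) \<le> K" .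
  then obtain B where B: "\<And>m. card (factors x m) \<le> B" using MH[OF bx] by blast
  have "factors w (B+1) \<subseteq> insert (factor_at w 0 (B+1)) (factors x (B+1))"
  proof
    fix v assume "v \<in> factors w (B+1)"
    then obtain i where i: "v = factor_at w i (B+1)" by (auto simp: factors_def)
    show "v \<in> insert (factor_at w 0 (B+1)) (factors x (B+1))"
    proof (cases i)
      case 0 thus ?thesis using i by simp
    next
      case (Suc k) 
      hence "v = factor_at x k (B+1)" using i by (simp add: fx)
      thus ?thesis unfolding factors_def by blast
    qed
  qed
  hence "card (factors w (B+1)) \<le> card (insert (factor_at w 0 (B+1)) (factors x (B+1)))"
    by (intro card_mono) (auto simp: factors_finite[OF bx])
  also have "\<dots> \<le> Suc (card (factors x (B+1)))" by (simp add: card_insert_le_m1 card_insert_if factors_finite[OF bx])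
  finally have "card (factors w (B+1)) \<le> Suc (card (factors x (B+1)))" .
  thus False using B[of "B+1"] cardF[of "B+1"] by simp
qed

end

lemma card_ge2: "finite A \<Longrightarrow> x \<in> A \<Longrightarrow> y \<in> A \<Longrightarrow> x \<noteq> y \<Longrightarrow> card A \<ge> 2"
proof -
  assume "finite A" "x \<in> A" "y \<in> A" "x \<noteq> y"
  hence "card {x,y} \<le> card A" by (intro card_mono) auto
  thus ?thesis using \<open>x \<noteq> y\<close> by simp
qed

lemma tl_factor_at: "tl (factor_at w i (Suc k)) = factor_at w (Suc i) k"
  by (simp add: factor_at_def upt_conv_Cons)

lemma om_iff: "x \<in> orbit_closure w \<longleftrightarrow> (\<forall>k. \<exists>i. factor_at w i k = factor_at x 0 k)"
proof -
  have "map x [0..<k] = factor_at x 0 k" for k by (simp add: factor_at_def)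
  thus ?thesis unfolding orbit_closure_def is_factor_def by auto
qed

context sturm begin

lemma recur: "\<exists>s\<ge>N. factor_at w s k = factor_at w i k"
proof (induction N)
  case 0 thus ?case by blast
next
  case (Suc N)
  then obtain s where s: "s \<ge> N" "factor_at w s k = factor_at w i k" by blast
  obtain r where r: "r \<ge> 1" "factor_at w r (s + k) = factor_at w 0 (s + k)" using prefix_recur by blast
  have "factor_at w (r + s) k = factor_at w s k"
    unfolding factor_at_eq_iff
  proof (intro allI impI)
    fix t assume "t < k"
    have "w (r + (s + t)) = w (0 + (s + t))" using r(2) \<open>t < k\<close> unfolding factor_at_eq_iff by simp
    thus "w (r + s + t) = w (s + t)" by (simp add: add.assoc)
  qed
  thus ?case using s r by (intro exI[of _ "r + s"]) auto
qed

lemma recur1: "\<exists>s\<ge>1. factor_at w s k = factor_at w i k" using recur by blast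

lemma RS_unique:
  assumes "factor_at w i k = factor_at w i' k" "w (i+k) \<noteq> w (i'+k)"
    "factor_at w j k = factor_at w j' k" "w (j+k) \<noteq> w (j'+k)"
  shows "factor_at w i k = factor_at w j k"
proof (rule ccontr)
  assume ne: "factor_at w i k \<noteq> factor_at w j k"
  let ?A = "factors w (Suc k)"
  have fin: "finite ?A" by (rule factors_finite[OF bin])
  have img: "take k ` ?A = factors w k" by (rule factors_take)
  have fib: "card {a\<in>?A. take k a = factor_at w p k} \<ge> 2"
    if "factor_at w p k = factor_at w p' k" "w (p+k) \<noteq> w (p'+k)" for p p'
  proof (rule card_ge2[of _ "factor_at w p (Suc k)" "factor_at w p' (Suc k)"])
    show "finite {a \<in> ?A. take k a = factor_at w p k}" using fin by simp
    show "factor_at w p (Suc k) \<in> {a \<in> ?A. take k a = factor_at w p k}"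
      by (auto simp: factors_def take_factor_at)
    show "factor_at w p' (Suc k) \<in> {a \<in> ?A. take k a = factor_at w p k}"
      using that by (auto simp: factors_def take_factor_at)
    have "factor_at w p (Suc k) ! k \<noteq> factor_at w p' (Suc k) ! k" using that by simp
    thus "factor_at w p (Suc k) \<noteq> factor_at w p' (Suc k)" by metis
  qed
  have "card ?A \<ge> card (take k ` ?A) + 2"
    by (rule two_fibers[OF fin ne]) (use fib[OF assms(1,2)] fib[OF assms(3,4)] img in \<open>auto simp: factors_def\<close>)
  thus False using cardF[of k] cardF[of "Suc k"] img by simp
qed

lemma LS_unique:
  assumes "factor_at w (Suc i) k = factor_at w (Suc i') k" "w i \<noteq> w i'"
    "factor_at w (Suc j) k = factor_at w (Suc j') k" "w j \<noteq> w j'"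
  shows "factor_at w (Suc i) k = factor_at w (Suc j) k"
proof (rule ccontr)
  assume ne: "factor_at w (Suc i) k \<noteq> factor_at w (Suc j) k"
  let ?A = "factors w (Suc k)"
  have fin: "finite ?A" by (rule factors_finite[OF bin])
  have img: "tl ` ?A = factors w k"
  proof
    show "tl ` ?A \<subseteq> factors w k" by (auto simp: factors_def tl_factor_at)
    show "factors w k \<subseteq> tl ` ?A"
    proof
      fix u assume "u \<in> factors w k"
      then obtain i0 where "u = factor_at w i0 k" by (auto simp: factors_def)
      moreover obtain s where "s \<ge> 1" "factor_at w s k = factor_at w i0 k" using recur1 by blast
      ultimately have "u = tl (factor_at w (s - 1) (Suc k))" by (simp add: tl_factor_at)
      thus "u \<in> tl ` ?A" by (auto simp: factors_def)
    qed
  qed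
  have fib: "card {a\<in>?A. tl a = factor_at w (Suc p) k} \<ge> 2"
    if "factor_at w (Suc p) k = factor_at w (Suc p') k" "w p \<noteq> w p'" for p p'
  proof (rule card_ge2[of _ "factor_at w p (Suc k)" "factor_at w p' (Suc k)"])
    show "finite {a \<in> ?A. tl a = factor_at w (Suc p) k}" using fin by simp
    show "factor_at w p (Suc k) \<in> {a \<in> ?A. tl a = factor_at w (Suc p) k}"
      by (auto simp: factors_def tl_factor_at)
    show "factor_at w p' (Suc k) \<in> {a \<in> ?A. tl a = factor_at w (Suc p) k}"
      using that by (auto simp: factors_def tl_factor_at)
    have "factor_at w p (Suc k) ! 0 \<noteq> factor_at w p' (Suc k) ! 0" using that by simp
    thus "factor_at w p (Suc k) \<noteq> factor_at w p' (Suc k)" by metis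
  qed
  have "card ?A \<ge> card (tl ` ?A) + 2"
    by (rule two_fibers[OF fin ne]) (use fib[OF assms(1,2)] fib[OF assms(3,4)] img in \<open>auto simp: factors_def\<close>)
  thus False using cardF[of k] cardF[of "Suc k"] img by simp
qed

abbreviation "om \<equiv> orbit_closure w"

lemma om_factor: "x \<in> om \<Longrightarrow> \<exists>i. factor_at w i k = factor_at x j k"
proof -
  assume "x \<in> om"
  then obtain i where i: "factor_at w i (j + k) = factor_at x 0 (j + k)" by (auto simp: om_iff)
  have "factor_at w (i + j) k = factor_at x j k"
    unfolding factor_at_eq_iff
  proof (intro allI impI)
    fix t assume "t < k"
    hence "w (i + (j + t)) = x (0 + (j + t))" using i unfolding factor_at_eq_iff by simp
    thus "w (i + j + t) = x (j + t)" by (simp add: add.assoc)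
  qed
  thus ?thesis by blast
qed

lemma om_bin: "x \<in> om \<Longrightarrow> x n = 0 \<or> x n = 1"
proof -
  assume "x \<in> om"
  then obtain i where "factor_at w i 1 = factor_at x n 1" using om_factor by blast
  hence "w (i + 0) = x (n + 0)" unfolding factor_at_eq_iff by simp
  thus ?thesis using bin'[of i] by simp
qed

lemma om_shift: assumes "x \<in> om" shows "(shift ^^ m) x \<in> om"
  unfolding om_iff shift_pow
proof (intro allI)
  fix k 
  from assms obtain i where "factor_at w i k = factor_at x m k" using om_factor by blast
  moreover have "factor_at x m k = factor_at (\<lambda>n. x (n + m)) 0 k"
    by (simp add: factor_at_eq_iff add.commute)
  ultimately show "\<exists>i. factor_at w i k = factor_at (\<lambda>n. x (n + m)) 0 k" by auto
qed

lemma w_om: "w \<in> om" unfolding om_iff by blast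

lemma shift_w_om: "(shift ^^ m) w \<in> om" by (rule om_shift[OF w_om])

lemma om_preimage:
  assumes "x \<in> om" shows "\<exists>c. (\<lambda>n. if n = 0 then c else x (n - 1)) \<in> om"
proof -
  have ex: "\<exists>c. \<exists>i. factor_at w i (Suc k) = c # factor_at x 0 k" for k
  proof -
    obtain i where "factor_at w i k = factor_at x 0 k" using assms om_factor by blast
    then obtain s where s: "s \<ge> 1" "factor_at w s k = factor_at x 0 k" using recur1 by metis
    have "factor_at w (s - 1) (Suc k) = w (s - 1) # factor_at w s k"
      using s(1) by (simp add: factor_at_def upt_conv_Cons)
    thus ?thesis using s by auto
  qed
  define P where "P c k \<longleftrightarrow> (\<exists>i. factor_at w i (Suc k) = c # factor_at x 0 k)" for c k
  have Pmono: "P c k" if hh: "P c k'" "k \<le> k'" for c k k'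
  proof -
    obtain i where i: "factor_at w i (Suc k') = c # factor_at x 0 k'" using hh(1)[unfolded P_def] by blast
    have "factor_at w i (Suc k) = c # factor_at x 0 k"
    proof -
      have "take (Suc k) (factor_at w i (Suc k')) = factor_at w i (Suc k)"
        using hh(2) by (simp add: take_factor_at)
      moreover have "take (Suc k) (c # factor_at x 0 k') = c # factor_at x 0 k"
        using hh(2) by (simp add: take_factor_at)
      ultimately show ?thesis using i by metis
    qed
    thus ?thesis unfolding P_def by blast
  qed
  have "\<exists>c. \<forall>k. P c k"
  proof (rule ccontr)
    assume "\<not> ?thesis"
    then obtain k0 k1 where "\<not> P 0 k0" "\<not> P 1 k1" by blast
    hence n0: "\<not> P 0 (max k0 k1)" and n1: "\<not> P 1 (max k0 k1)" using Pmono by (meson max.cobounded1 max.cobounded2)+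
    obtain c i where ci: "factor_at w i (Suc (max k0 k1)) = c # factor_at x 0 (max k0 k1)" using ex by blast
    have "c = w (i + 0)" using arg_cong[OF ci, of "\<lambda>l. l ! 0"] by simp
    hence "c = 0 \<or> c = 1" using bin'[of i] by simp
    thus False using n0[unfolded P_def] n1[unfolded P_def] ci by blast
  qed
  then obtain c where c: "\<forall>k. P c k" by blast
  have "\<exists>i. factor_at w i k = factor_at (\<lambda>n. if n = 0 then c else x (n - 1)) 0 k" for k
  proof (cases k)
    case 0 thus ?thesis by (simp add: factor_at_def)
  next
    case (Suc k')
    obtain i where i: "factor_at w i (Suc k') = c # factor_at x 0 k'" using c[unfolded P_def] by blast
    have "factor_at (\<lambda>n. if n = 0 then c else x (n - 1)) 0 (Suc k') = c # factor_at x 0 k'"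
      by (simp add: factor_at_def upt_conv_Cons del: upt_Suc) (simp add: list_eq_iff_nth_eq del: upt_Suc)
    thus ?thesis using i Suc by auto
  qed
  thus ?thesis unfolding om_iff by blast
qed

end

context sturm begin

definition wt :: "nat \<Rightarrow> nat \<Rightarrow> nat" where "wt i m = (\<Sum>t<m. w (i + t))"

lemma wt_Suc: "wt i (Suc m) = wt i m + w (i + m)" by (simp add: wt_def)
lemma wt_Suc_front: "wt i (Suc m) = w i + wt (Suc i) m"
  unfolding wt_def by (subst sum.lessThan_Suc_shift) simp
lemma wt_split: "k \<le> m \<Longrightarrow> wt i m = wt i k + wt (i + k) (m - k)"
proof (induction m)
  case 0 thus ?case by (simp add: wt_def)
next
  case (Suc m)
  show ?case
  proof (cases "k = Suc m")
    case True thus ?thesis by (simp add: wt_def)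
  next
    case False
    hence "k \<le> m" using Suc by simp
    hence "Suc m - k = Suc (m - k)" by simp
    thus ?thesis using Suc.IH[OF \<open>k \<le> m\<close>] \<open>k \<le> m\<close> by (simp add: wt_Suc add.assoc)
  qed
qed
lemma wt_eq: "factor_at w i m = factor_at w j m \<Longrightarrow> wt i m = wt j m"
  unfolding wt_def factor_at_eq_iff by (intro sum.cong) auto

definition unb :: "nat \<Rightarrow> bool" where
  "unb n \<longleftrightarrow> (\<exists>i j. w i = 0 \<and> w (i+n+1) = 0 \<and> w j = 1 \<and> w (j+n+1) = 1 \<and>
       factor_at w (Suc i) n = factor_at w (Suc j) n)"

lemma wt_le: "wt i m \<le> m"
proof (induction m)
  case 0 thus ?case by (simp add: wt_def)
next
  case (Suc m) thus ?case using bin'[of "i + m"] by (auto simp: wt_Suc)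
qed

lemma shorten: "wt j m \<ge> wt i m + 2 \<Longrightarrow> \<exists>n. n + 2 \<le> m \<and> unb n"
proof (induction m arbitrary: i j rule: less_induct)
  case (less m)
  have m2: "m \<ge> 2"
  proof -
    have "wt j m \<le> m" by (rule wt_le)
    thus ?thesis using less.prems by linarith
  qed
  then obtain m1 where m1: "m = Suc m1" by (cases m) auto
  show ?case
  proof (cases "w i = 0 \<and> w j = 1")
    case False
    have "w j \<le> w i" using False bin'[of i] bin'[of j] by auto
    hence "wt (Suc j) m1 \<ge> wt (Suc i) m1 + 2" using less.prems unfolding m1 wt_Suc_front by linarith
    from less.IH[OF _ this] m1 obtain n where "n + 2 \<le> m1" "unb n" by auto
    thus ?thesis using m1 by (intro exI[of _ n]) auto
  next
    case True
    show ?thesis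
    proof (cases "w (i + m1) = 0 \<and> w (j + m1) = 1")
      case False
      have "w (j + m1) \<le> w (i + m1)" using False bin'[of "i+m1"] bin'[of "j+m1"] by auto
      hence "wt j m1 \<ge> wt i m1 + 2" using less.prems unfolding m1 wt_Suc by linarith
      from less.IH[OF _ this] m1 obtain n where "n + 2 \<le> m1" "unb n" by auto
    thus ?thesis using m1 by (intro exI[of _ n]) auto
    next
      case True2: True
      obtain L where mL: "m1 = Suc L" using m1 m2 by (cases m1) auto
      have wi: "wt i m = wt (Suc i) L" and wj: "wt j m = 1 + wt (Suc j) L + 1"
      proof -
        have e1: "w (Suc i + L) = 0" using True2 mL by simp
        have "wt i m = w i + wt (Suc i) (Suc L)" unfolding m1 mL by (rule wt_Suc_front)
        also have "\<dots> = wt (Suc i) L" unfolding wt_Suc e1 using True by simp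
        finally show "wt i m = wt (Suc i) L" .
        have e2: "w (Suc j + L) = 1" using True2 mL by simp
        have "wt j m = w j + wt (Suc j) (Suc L)" unfolding m1 mL by (rule wt_Suc_front)
        also have "\<dots> = 1 + wt (Suc j) L + 1" unfolding wt_Suc e2 using True by simp
        finally show "wt j m = 1 + wt (Suc j) L + 1" .
      qed
      have inner: "wt (Suc j) L \<ge> wt (Suc i) L" using less.prems wi wj by linarith
      show ?thesis
      proof (cases "factor_at w (Suc i) L = factor_at w (Suc j) L")
        case True3: True
        have "i + L + 1 = i + m1" "j + L + 1 = j + m1" using mL by auto
        hence "unb L" unfolding unb_def using True True2 True3
          by (intro exI[of _ i] exI[of _ j]) auto
        thus ?thesis using mL m1 by (intro exI[of _ L]) auto
      next
        case False
        then obtain t0 where "t0 < L" "w (Suc i + t0) \<noteq> w (Suc j + t0)" by (auto simp: factor_at_eq_iff)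
        define k where "k = (LEAST t. t < L \<and> w (Suc i + t) \<noteq> w (Suc j + t))"
        have k: "k < L" "w (Suc i + k) \<noteq> w (Suc j + k)"
          using LeastI[of "\<lambda>t. t < L \<and> w (Suc i + t) \<noteq> w (Suc j + t)", OF conjI, OF \<open>t0 < L\<close> \<open>w (Suc i + t0) \<noteq> w (Suc j + t0)\<close>]
          unfolding k_def by auto
        have pre: "t < k \<Longrightarrow> w (Suc i + t) = w (Suc j + t)" for t
          using not_less_Least[of t "\<lambda>t. t < L \<and> w (Suc i + t) \<noteq> w (Suc j + t)"] k unfolding k_def by auto
        show ?thesis
        proof (cases "w (Suc i + k) = 0")
          case True4: True
          have "w (Suc j + k) = 1" using k(2) True4 bin'[of "Suc j + k"] by auto
          have "unb k" unfolding unb_def using True True4 \<open>w (Suc j + k) = 1\<close> pre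
            by (intro exI[of _ i] exI[of _ j]) (auto simp: factor_at_eq_iff)
          thus ?thesis using k mL m1 by (intro exI[of _ k]) auto
        next
          case False4: False
          have i1: "w (Suc i + k) = 1" using False4 bin'[of "Suc i + k"] by auto
          have j0: "w (Suc j + k) = 0" using k(2) i1 bin'[of "Suc j + k"] by auto
          define R where "R = L - k - 1"
          have LR: "L = k + 1 + R" using k unfolding R_def by simp
          have eqpre: "wt (Suc i) k = wt (Suc j) k" by (rule wt_eq) (use pre in \<open>auto simp: factor_at_eq_iff\<close>)
          have si: "wt (Suc i) L = wt (Suc i) k + 1 + wt (Suc i + k + 1) R"
            using wt_split[of k L "Suc i"] wt_Suc_front[of "Suc i + k" R] i1 LR by simp
          have sj: "wt (Suc j) L = wt (Suc j) k + wt (Suc j + k + 1) R"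
            using wt_split[of k L "Suc j"] wt_Suc_front[of "Suc j + k" R] j0 LR by simp
          have "wt (Suc j + k + 1) R \<ge> wt (Suc i + k + 1) R + 1" using si sj eqpre inner by linarith
          moreover have "Suc i + k + 1 + R = i + m1" "Suc j + k + 1 + R = j + m1" using LR mL by auto
          hence "w (Suc i + k + 1 + R) = 0" "w (Suc j + k + 1 + R) = 1" using True2 by (auto simp: add.assoc)
          hence "wt (Suc i + k + 1) (Suc R) = wt (Suc i + k + 1) R"
            "wt (Suc j + k + 1) (Suc R) = wt (Suc j + k + 1) R + 1" unfolding wt_Suc by auto
          ultimately have "wt (Suc j + k + 1) (Suc R) \<ge> wt (Suc i + k + 1) (Suc R) + 2" by linarith
          moreover have "Suc R < m" using LR mL m1 by simp
          ultimately obtain n where "n + 2 \<le> Suc R" "unb n" using less.IH by blast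
          thus ?thesis using LR mL m1 by (intro exI[of _ n]) auto
        qed
      qed
    qed
  qed
qed

end

context sturm begin
lemma wt_frame: "wt q (Suc (Suc k)) = w q + wt (Suc q) k + w (Suc q + k)"
  by (simp only: wt_Suc_front[of q "Suc k"] wt_Suc[of "Suc q" k] add.assoc)
end

locale nbl = sturm +
  fixes n i0 j0 :: nat
  assumes minimal: "\<And>n'. n' < n \<Longrightarrow> \<not> unb n'"
    and wi0: "w i0 = 0" and wi0n: "w (i0 + n + 1) = 0"
    and wj0: "w j0 = 1" and wj0n: "w (j0 + n + 1) = 1"
    and vv: "factor_at w (Suc i0) n = factor_at w (Suc j0) n"
begin

abbreviation V where "V t \<equiv> w (Suc i0 + t)"

lemma Vj: "t < n \<Longrightarrow> w (Suc j0 + t) = V t"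
  using vv unfolding factor_at_eq_iff by simp

lemma pal: "t < n \<Longrightarrow> V t = V (n - 1 - t)"
proof (rule ccontr)
  assume "t < n" "V t \<noteq> V (n - 1 - t)"
  define k where "k = (LEAST t. t < n \<and> V t \<noteq> V (n - 1 - t))"
  have k: "k < n" "V k \<noteq> V (n - 1 - k)"
    using LeastI[of "\<lambda>t. t < n \<and> V t \<noteq> V (n - 1 - t)", OF conjI, OF \<open>t < n\<close> \<open>V t \<noteq> V (n - 1 - t)\<close>]
    unfolding k_def by auto
  have pre: "t < k \<Longrightarrow> V t = V (n - 1 - t)" for t
    using not_less_Least[of t "\<lambda>t. t < n \<and> V t \<noteq> V (n - 1 - t)"] k unfolding k_def by auto
  have kk: "k < n - 1 - k"
  proof (rule ccontr)
    assume "\<not> k < n - 1 - k"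
    hence le: "n - 1 - k \<le> k" by simp
    have "n - 1 - k \<noteq> k" using k(2) by auto
    hence "n - 1 - k < k" using le by simp
    from pre[OF this] have "V (n - 1 - k) = V (n - 1 - (n - 1 - k))" .
    moreover have "n - 1 - (n - 1 - k) = k" using k(1) by simp
    ultimately show False using k(2) by simp
  qed
  define S where "S = wt (Suc i0) k"
  have S2: "wt (Suc (q + (n - k))) k = S"
    if hq: "\<And>t. t < n \<Longrightarrow> w (Suc q + t) = V t" for q
  proof -
    have "(\<Sum>t<k. w (Suc (q + (n - k)) + t)) = (\<Sum>t<k. V (n - k + t))"
    proof (intro sum.cong refl)
      fix t assume "t \<in> {..<k}"
      hence "n - k + t < n" using kk by auto
      moreover have "Suc (q + (n - k)) + t = Suc q + (n - k + t)" by simp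
      ultimately show "w (Suc (q + (n - k)) + t) = V (n - k + t)" using hq by metis
    qed
    also have "\<dots> = (\<Sum>t<k. V (n - k + (k - Suc t)))"
      by (rule sum.nat_diff_reindex[symmetric])
    also have "\<dots> = (\<Sum>t<k. V t)"
    proof (intro sum.cong refl)
      fix t assume "t \<in> {..<k}"
      hence "n - k + (k - Suc t) = n - 1 - t" using kk by auto
      thus "V (n - k + (k - Suc t)) = V t" using pre \<open>t \<in> {..<k}\<close> by auto
    qed
    finally show ?thesis unfolding S_def wt_def by (simp add: add.assoc)
  qed
  have e1: "i0 + n - k = Suc (i0 + (n - 1 - k))" "j0 + n - k = Suc (j0 + (n - 1 - k))" using kk by auto
  have e2: "Suc (i0 + n - k) + k = i0 + n + 1" "Suc (j0 + n - k) + k = j0 + n + 1" using kk by auto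
  have e3: "Suc (i0 + n - k) = Suc (i0 + (n - k))" "Suc (j0 + n - k) = Suc (j0 + (n - k))" using kk by auto
  have Vk1: "w (Suc i0 + k) = V k" "w (Suc j0 + k) = V k" using Vj k by auto
  have vi: "w (i0 + n - k) = V (n - 1 - k)" "w (j0 + n - k) = V (n - 1 - k)"
    unfolding e1 using Vj[of "n - 1 - k"] kk by auto
  have wtA: "wt i0 (Suc (Suc k)) = S + V k" unfolding wt_frame S_def using wi0 by simp
  have "wt (Suc j0) k = S" unfolding S_def
  proof (rule wt_eq)
    show "factor_at w (Suc j0) k = factor_at w (Suc i0) k"
      unfolding factor_at_eq_iff using Vj k(1) by auto
  qed
  hence wtB: "wt j0 (Suc (Suc k)) = 1 + S + V k" unfolding wt_frame using wj0 Vk1 by simp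
  have wtC: "wt (i0 + n - k) (Suc (Suc k)) = V (n - 1 - k) + S"
    unfolding wt_frame unfolding e2 unfolding vi unfolding e3 using S2[of i0] wi0n by simp
  have wtD: "wt (j0 + n - k) (Suc (Suc k)) = V (n - 1 - k) + S + 1"
    unfolding wt_frame unfolding e2 unfolding vi unfolding e3 using S2[of j0] wj0n Vj by simp
  obtain n' where "n' + 2 \<le> Suc (Suc k)" "unb n'"
  proof (cases "V k = 0")
    case True
    hence "V (n - 1 - k) = 1" using k(2) bin'[of "Suc i0 + (n - 1 - k)"] by auto
    hence "wt (j0 + n - k) (Suc (Suc k)) \<ge> wt i0 (Suc (Suc k)) + 2" using wtA wtD True by simp
    thus ?thesis using shorten that by blast
  next
    case False
    hence "V k = 1" using bin'[of "Suc i0 + k"] by auto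
    hence "V (n - 1 - k) = 0" using k(2) bin'[of "Suc i0 + (n - 1 - k)"] by auto
    hence "wt j0 (Suc (Suc k)) \<ge> wt (i0 + n - k) (Suc (Suc k)) + 2" using wtB wtC \<open>V k = 1\<close> by simp
    thus ?thesis using shorten that by blast
  qed
  thus False using minimal kk by auto
qed

end

lemma fa_Cons: "factor_at w p (Suc k) = w p # factor_at w (Suc p) k"
  by (simp add: factor_at_def upt_conv_Cons del: upt_Suc)

context nbl begin

definition v where "v = factor_at w (Suc i0) n"
definition occ where "occ k \<longleftrightarrow> factor_at w k n = v"

lemma occ_i0: "occ (Suc i0)" and occ_j0: "occ (Suc j0)"
  using vv by (auto simp: occ_def v_def)

lemma occ_nth: "occ k \<Longrightarrow> t < n \<Longrightarrow> w (k + t) = V t"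
  unfolding occ_def v_def factor_at_eq_iff by simp

lemma out_i0: "w (Suc i0 + n) = 0" using wi0n by simp
lemma out_j0: "w (Suc j0 + n) = 1" using wj0n by simp

lemma RSu: "factor_at w k n = factor_at w k' n \<Longrightarrow> \<not> occ k \<Longrightarrow> w (k + n) = w (k' + n)"
proof (rule ccontr)
  assume h: "factor_at w k n = factor_at w k' n" "\<not> occ k" "w (k + n) \<noteq> w (k' + n)"
  have "factor_at w k n = factor_at w (Suc i0) n"
    by (rule RS_unique[OF h(1) h(3) vv]) (use out_i0 out_j0 in simp)
  thus False using h(2) by (simp add: occ_def v_def)
qed

lemma occ_recur: "\<exists>k\<ge>N. occ k"
  using recur[of N n "Suc i0"] by (auto simp: occ_def v_def)

definition nx where "nx k = (LEAST k'. k < k' \<and> occ k')"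

lemma nx_ex: "\<exists>k'. k < k' \<and> occ k'"
proof -
  obtain k' where "k' \<ge> Suc k" "occ k'" using occ_recur by blast
  thus ?thesis by (intro exI[of _ k']) auto
qed

lemma nx_gt: "k < nx k" and nx_occ: "occ (nx k)"
  using LeastI_ex[OF nx_ex[of k]] unfolding nx_def by auto

lemma nx_min: "k < k' \<Longrightarrow> k' < nx k \<Longrightarrow> \<not> occ k'"
  using not_less_Least unfolding nx_def by blast

lemma nx_eq: "k < k' \<Longrightarrow> occ k' \<Longrightarrow> (\<And>q. k < q \<Longrightarrow> q < k' \<Longrightarrow> \<not> occ q) \<Longrightarrow> nx k = k'"
  unfolding nx_def by (rule Least_equality) (auto simp: not_less[symmetric])

lemma FD:
  assumes "factor_at w p n = factor_at w p' n" "\<And>u. u < m \<Longrightarrow> \<not> occ (p + u)"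
  shows "u < m + n \<Longrightarrow> w (p + u) = w (p' + u)"
  using assms(2)
proof (induction m arbitrary: u)
  case 0 thus ?case using assms(1) unfolding factor_at_eq_iff by simp
next
  case (Suc m)
  have IH: "u < m + n \<Longrightarrow> w (p + u) = w (p' + u)" for u using Suc.IH Suc.prems(2) by auto
  show ?case
  proof (cases "u < m + n")
    case True thus ?thesis using IH by blast
  next
    case False
    hence u: "u = m + n" using Suc.prems(1) by simp
    have "factor_at w (p + m) n = factor_at w (p' + m) n"
      unfolding factor_at_eq_iff using IH by (simp add: add.assoc)
    from RSu[OF this Suc.prems(2)[of m]] show ?thesis unfolding u by (simp add: add.assoc)
  qed
qed

lemma Dh:
  assumes "occ k" "occ k'" "w (k + n) = w (k' + n)"
  shows "u < (nx k - k) + n \<Longrightarrow> w (k + u) = w (k' + u)"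
proof -
  assume u: "u < (nx k - k) + n"
  have win: "factor_at w (Suc k) n = factor_at w (Suc k') n"
    unfolding factor_at_eq_iff
  proof (intro allI impI)
    fix t assume "t < n"
    show "w (Suc k + t) = w (Suc k' + t)"
    proof (cases "Suc t < n")
      case True thus ?thesis using occ_nth[OF assms(1) True] occ_nth[OF assms(2) True] by simp
    next
      case False hence "Suc t = n" using \<open>t < n\<close> by simp
      hence e1: "Suc k + t = k + n" and e2: "Suc k' + t = k' + n" by auto
      show ?thesis unfolding e1 e2 by (rule assms(3))
    qed
  qed
  have no: "\<not> occ (Suc k + u')" if "u' < nx k - k - 1" for u'
    using nx_min[of k "Suc k + u'"] that by auto
  show ?thesis
  proof (cases u)
    case 0
    show ?thesis
    proof (cases "0 < n")
      case True thus ?thesis using occ_nth[OF assms(1) True] occ_nth[OF assms(2) True] 0 by simp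
    next
      case False thus ?thesis using assms(3) 0 by simp
    qed
  next
    case (Suc u')
    have "u' < (nx k - k - 1) + n" using u Suc nx_gt[of k] by simp
    from FD[OF win no this] show ?thesis using Suc by simp
  qed
qed

lemma D:
  assumes "occ k" "occ k'" "w (k + n) = w (k' + n)"
  shows "nx k - k = nx k' - k'"
proof -
  have le: "nx b - b \<le> nx a - a" if "occ a" "occ b" "w (a + n) = w (b + n)" for a b
  proof -
    have agree: "w (a + u) = w (b + u)" if "u < (nx a - a) + n" for u using Dh[OF \<open>occ a\<close> \<open>occ b\<close> \<open>w (a + n) = w (b + n)\<close> that] .
    have "occ (b + (nx a - a))"
    proof -
      have "factor_at w (b + (nx a - a)) n = factor_at w (nx a) n"
        unfolding factor_at_eq_iff
      proof (intro allI impI)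
        fix t assume "t < n"
        have "w (a + ((nx a - a) + t)) = w (b + ((nx a - a) + t))" by (rule agree) (use \<open>t < n\<close> in simp)
        moreover have "a + ((nx a - a) + t) = nx a + t" using nx_gt[of a] by simp
        ultimately show "w (b + (nx a - a) + t) = w (nx a + t)" by (simp add: add.assoc)
      qed
      thus ?thesis using nx_occ[of a] by (simp add: occ_def)
    qed
    moreover have "b < b + (nx a - a)" using nx_gt[of a] by simp
    ultimately have "\<not> (b + (nx a - a) < nx b)" using nx_min by blast
    thus ?thesis by simp
  qed
  show ?thesis using le[OF assms] le[OF assms(2,1) assms(3)[symmetric]] by simp
qed

definition K :: "nat \<Rightarrow> nat" where "K c = (if c = 0 then Suc i0 else Suc j0)"
definition r where "r c = nx (K c) - K c"
definition l where "l c = w (nx (K c) - 1)"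

lemma K_occ: "occ (K c)" by (simp add: K_def occ_i0 occ_j0)
lemma K_out: "c = 0 \<or> c = 1 \<Longrightarrow> w (K c + n) = c" using out_i0 out_j0 by (auto simp: K_def)
lemma r_pos: "r c \<ge> 1" using nx_gt[of "K c"] by (simp add: r_def)
lemma nxK: "nx (K c) = K c + r c" using nx_gt[of "K c"] by (simp add: r_def)

lemma rl:
  assumes "occ k" "w (k + n) = c" "c = 0 \<or> c = 1"
  shows "nx k = k + r c" "w (nx k - 1) = l c"
proof -
  have o: "w (k + n) = w (K c + n)" using assms K_out by simp
  have e: "nx k - k = r c" using D[OF assms(1) K_occ o] by (simp add: r_def)
  thus "nx k = k + r c" using nx_gt[of k] by simp
  have "w (k + (r c - 1)) = w (K c + (r c - 1))"
    using Dh[OF assms(1) K_occ o, of "r c - 1"] e r_pos[of c] by simp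
  moreover have "k + (r c - 1) = nx k - 1" "K c + (r c - 1) = nx (K c) - 1"
    using e r_pos[of c] nx_gt[of k] nxK[of c] by auto
  ultimately show "w (nx k - 1) = l c" by (simp add: l_def)
qed

lemma l_bin: "l c = 0 \<or> l c = 1" unfolding l_def by (rule bin')

lemma L1: "l 0 \<noteq> l 1"
proof
  assume eq: "l 0 = l 1"
  have claim: "w (k2 - 1) = l 0" if "occ k2" "Suc i0 < k2" for k2
  proof -
    define A where "A = {q. Suc i0 \<le> q \<and> q < k2 \<and> occ q}"
    have fin: "finite A" unfolding A_def by (rule finite_subset[of _ "{..<k2}"]) auto
    have ne: "Suc i0 \<in> A" using that occ_i0 unfolding A_def by simp
    define p where "p = Max A"
    have pA: "p \<in> A" unfolding p_def using fin ne Max_in by blast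
    have pmax: "q \<in> A \<Longrightarrow> q \<le> p" for q unfolding p_def using fin Max_ge by blast
    have "nx p = k2"
    proof (rule nx_eq)
      show "p < k2" using pA unfolding A_def by simp
      show "occ k2" by fact
      fix q assume "p < q" "q < k2"
      thus "\<not> occ q" using pmax[of q] pA unfolding A_def by fastforce
    qed
    moreover have "occ p" using pA unfolding A_def by simp
    ultimately show ?thesis using rl(2)[of p "w (p + n)"] bin'[of "p + n"] eq by auto
  qed
  obtain p0 where p0: "w p0 = 1 - l 0" "occ (Suc p0)"
  proof (cases "l 0 = 0")
    case True thus ?thesis using that[of j0] wj0 occ_j0 by simp
  next
    case False hence "l 0 = 1" using l_bin[of 0] by simp
    thus ?thesis using that[of i0] wi0 occ_i0 by simp
  qed
  obtain s where s: "s \<ge> Suc i0" "factor_at w s (Suc n) = factor_at w p0 (Suc n)" using recur by blast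
  have "w s = w p0" "factor_at w (Suc s) n = factor_at w (Suc p0) n" using s(2) unfolding fa_Cons by auto
  hence "occ (Suc s)" "w s = 1 - l 0" using p0 by (auto simp: occ_def)
  moreover have "w (Suc s - 1) = l 0" using claim[of "Suc s"] \<open>occ (Suc s)\<close> s(1) by simp
  ultimately show False using l_bin[of 0] by auto
qed

lemma L2: assumes "c = 0 \<or> c = 1" "r c \<le> n + 1" shows "l c = c"
proof -
  let ?k = "K c"
  have nk: "nx ?k = ?k + r c" by (rule nxK)
  have lc: "l c = w (?k + (r c - 1))" unfolding l_def nk using r_pos[of c] by (simp add: add.commute)
  show ?thesis
  proof (cases "r c = n + 1")
    case True thus ?thesis using lc K_out[OF assms(1)] by simp
  next
    case False
    hence a: "r c \<le> n" using assms(2) by simp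
    have o2: "occ (?k + r c)" using nx_occ[of ?k] nk by simp
    have "?k + r c + (n - r c) = ?k + n" using a by simp
    hence "c = w (?k + r c + (n - r c))" using K_out[OF assms(1)] by simp
    also have "\<dots> = V (n - r c)" by (rule occ_nth[OF o2]) (use r_pos[of c] a in simp)
    finally have c: "c = V (n - r c)" .
    have "l c = w (?k + (r c - 1))" by (rule lc)
    also have "\<dots> = V (r c - 1)" by (rule occ_nth[OF K_occ]) (use r_pos[of c] a in simp)
    also have "\<dots> = V (n - 1 - (r c - 1))" using pal[of "r c - 1"] r_pos[of c] a by simp
    also have "n - 1 - (r c - 1) = n - r c" using r_pos[of c] a by simp
    finally show ?thesis using c by simp
  qed
qed

end

context nbl begin

lemma noocc: "0 < t \<Longrightarrow> t < r c \<Longrightarrow> \<not> occ (K c + t)"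
  using nx_min[of "K c" "K c + t"] nxK[of c] by simp

lemma FDw: 
  assumes "factor_at w p n = factor_at w p' n" "\<And>u. u < m \<Longrightarrow> \<not> occ (p + u)"
  shows "factor_at w (p + m) n = factor_at w (p' + m) n"
  unfolding factor_at_eq_iff
proof (intro allI impI)
  fix t assume "t < n"
  have "m + t < m + n" using \<open>t < n\<close> by simp
  from FD[OF assms this] have "w (p + (m + t)) = w (p' + (m + t))" .
  thus "w (p + m + t) = w (p' + m + t)" by (simp add: add.assoc)
qed

lemma occ_cong: "factor_at w a n = factor_at w b n \<Longrightarrow> occ b \<Longrightarrow> occ a"
  by (simp add: occ_def)

lemma lK: "l c = w (K c + r c - 1)" unfolding l_def nxK ..

lemma within:
  assumes "t < t'" "t' < r c" "factor_at w (K c + t) n = factor_at w (K c + t') n"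
  shows False
proof (cases "t = 0")
  case True
  have "occ (K c + t')" using assms(3) K_occ True by (simp add: occ_def)
  thus False using noocc[of t' c] assms by simp
next
  case False
  let ?m = "r c - t'"
  have no: "\<not> occ (K c + t + u)" if "u < ?m" for u
    using noocc[of "t + u" c] that False assms by (simp add: add.assoc)
  have "factor_at w (K c + t + ?m) n = factor_at w (K c + t' + ?m) n" by (rule FDw[OF assms(3) no])
  moreover have "K c + t' + ?m = nx (K c)" using nxK[of c] assms by simp
  ultimately have "occ (K c + t + ?m)" using nx_occ[of "K c"] by (simp add: occ_def)
  moreover obtain q where q: "q = t + ?m" by blast
  ultimately have "occ (K c + q)" by (simp add: add.assoc)
  moreover have "0 < q" "q < r c" using q assms False by auto
  ultimately show False using noocc by blast
qed

lemma cross: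
  assumes "t < r 0" "0 < s" "s < r 1" "factor_at w (K 0 + t) n = factor_at w (K 1 + s) n"
  shows False
proof (cases "t = 0")
  case True
  have "occ (K 1 + s)" using assms(4) K_occ[of 0] True by (simp add: occ_def)
  thus False using noocc[of s 1] assms by simp
next
  case False
  let ?m0 = "r 0 - t" and ?m1 = "r 1 - s"
  show False
  proof (cases "?m0 \<le> ?m1")
    case True
    have no: "\<not> occ (K 0 + t + u)" if "u < ?m0" for u
      using noocc[of "t + u" 0] that False assms by (simp add: add.assoc)
    have eq: "factor_at w (K 0 + t + ?m0) n = factor_at w (K 1 + s + ?m0) n" by (rule FDw[OF assms(4) no])
    have "K 0 + t + ?m0 = nx (K 0)" using nxK[of 0] assms by simp
    hence o: "occ (K 1 + (s + ?m0))" using eq nx_occ[of "K 0"] by (simp add: occ_def add.assoc)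
    show False
    proof (cases "s + ?m0 < r 1")
      case True thus False using noocc[of "s + ?m0" 1] o assms by simp
    next
      case False
      hence sm: "s + ?m0 = r 1" using True assms by simp
      have "w (K 0 + t + (?m0 - 1)) = w (K 1 + s + (?m0 - 1))"
      proof -
        have "r 0 - t - 1 < r 0 - t + n" using assms(1) by arith
        from FD[where m = "r 0 - t", OF assms(4) no this] show ?thesis .
      qed
      moreover have "K 0 + t + (?m0 - 1) = K 0 + r 0 - 1" using assms \<open>t \<noteq> 0\<close> by simp
      moreover have "K 1 + s + (?m0 - 1) = K 1 + r 1 - 1" using sm assms \<open>t \<noteq> 0\<close> by simp
      ultimately have "l 0 = l 1" unfolding lK by simp
      thus False using L1 by simp
    qed
  next
    case False2: False
    have no: "\<not> occ (K 1 + s + u)" if "u < ?m1" for u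
      using noocc[of "s + u" 1] that assms by (simp add: add.assoc)
    have eq: "factor_at w (K 1 + s + ?m1) n = factor_at w (K 0 + t + ?m1) n" by (rule FDw[OF assms(4)[symmetric] no])
    have "K 1 + s + ?m1 = nx (K 1)" using nxK[of 1] assms by simp
    hence o: "occ (K 0 + t + ?m1)" using eq nx_occ[of "K 1"] by (simp add: occ_def)
    obtain q where q: "q = t + ?m1" by blast
    have "occ (K 0 + q)" using o q by (simp add: add.assoc)
    moreover have "0 < q" "q < r 0" using q False2 False assms by auto
    ultimately show False using noocc by blast
  qed
qed

lemma L3: "r 0 + r 1 \<le> n + 2"
proof -
  define N where "N = r 0 + r 1 - 1"
  define g where "g t = (if t < r 0 then factor_at w (K 0 + t) n else factor_at w (K 1 + (t + 1 - r 0)) n)" for t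
  have inj_aux: "t1 < t2 \<Longrightarrow> t2 < N \<Longrightarrow> g t1 \<noteq> g t2" for t1 t2
  proof
    assume h: "t1 < t2" "t2 < N" "g t1 = g t2"
    show False
    proof (cases "t2 < r 0")
      case True
      thus False using within[of t1 t2 0] h unfolding g_def by simp
    next
      case F2: False
      show False
      proof (cases "t1 < r 0")
        case True
        define s where "s = t2 + 1 - r 0"
        have "g t2 = factor_at w (K 1 + s) n" using F2 unfolding g_def s_def by simp
        moreover have "g t1 = factor_at w (K 0 + t1) n" using True unfolding g_def by simp
        moreover have "0 < s" "s < r 1" using F2 h unfolding s_def N_def by auto
        ultimately show False using cross[of t1 s] h True by simp
      next
        case False
        define s1 where "s1 = t1 + 1 - r 0"
        define s2 where "s2 = t2 + 1 - r 0"
        have "g t2 = factor_at w (K 1 + s2) n" using F2 unfolding g_def s2_def by simp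
        moreover have "g t1 = factor_at w (K 1 + s1) n" using False unfolding g_def s1_def by simp
        moreover have "s1 < s2" "s2 < r 1" using F2 False h unfolding s1_def s2_def N_def by auto
        ultimately show False using within[of s1 s2 1] h by simp
      qed
    qed
  qed
  have "inj_on g {..<N}"
  proof (rule inj_onI)
    fix t1 t2 assume "t1 \<in> {..<N}" "t2 \<in> {..<N}" "g t1 = g t2"
    thus "t1 = t2" using inj_aux[of t1 t2] inj_aux[of t2 t1] by (metis lessThan_iff nat_neq_iff)
  qed
  hence "card (g ` {..<N}) = N" by (simp add: card_image)
  moreover have "g ` {..<N} \<subseteq> factors w n" by (auto simp: g_def factors_def)
  ultimately have "N \<le> card (factors w n)" using card_mono[OF factors_finite[OF bin]] by metis
  thus ?thesis using cardF[of n] unfolding N_def by simp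
qed

lemma per_c:
  assumes c: "c = 0 \<or> c = 1" and lc: "l c = c"
    and noext: "\<And>p. w p = c \<Longrightarrow> occ (Suc p) \<Longrightarrow> w (Suc p + n) = c"
    and p0: "w p0 = c" "occ (Suc p0)"
  shows False
proof -
  let ?k = "Suc p0" and ?r = "r c"
  have st: "occ (?k + m * ?r) \<and> w (?k + m * ?r - 1) = c \<and> w (?k + m * ?r + n) = c" for m
  proof (induction m)
    case 0 thus ?case using p0 noext by simp
  next
    case (Suc m)
    let ?km = "?k + m * ?r"
    have o: "occ ?km" and out: "w (?km + n) = c" using Suc by auto
    have e: "?k + Suc m * ?r = ?km + ?r" by simp
    have "nx ?km = ?km + ?r" "w (nx ?km - 1) = l c" using rl[OF o out c] by auto
    hence "occ (?km + ?r)" "w (?km + ?r - 1) = c" using nx_occ[of ?km] lc by auto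
    hence o2: "occ (?k + Suc m * ?r)" and in2: "w (?k + Suc m * ?r - 1) = c" unfolding e by auto
    have "?k + Suc m * ?r = Suc (?k + Suc m * ?r - 1)" by simp
    hence "w (?k + Suc m * ?r + n) = c" using noext[of "?k + Suc m * ?r - 1"] o2 in2 by simp
    thus ?case using o2 in2 by simp
  qed
  have per: "w (?k + t) = w (?k + ?r + t)" for t
  proof -
    define m where "m = t div ?r"
    define t' where "t' = t mod ?r"
    have t: "t = m * ?r + t'" unfolding m_def t'_def by simp
    have t'r: "t' < ?r" unfolding t'_def using r_pos[of c] by simp
    let ?km = "?k + m * ?r"
    have o: "occ ?km" and out: "w (?km + n) = c" using st[of m] by blast+
    have o': "occ (?k + Suc m * ?r)" and out': "w (?k + Suc m * ?r + n) = c" using st[of "Suc m"] by blast+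
    have nk: "nx ?km = ?km + ?r" using rl[OF o out c] by simp
    have "w (?km + t') = w (?k + Suc m * ?r + t')"
      by (rule Dh[OF o o']) (use out out' nk t'r in simp_all)
    thus ?thesis unfolding t by (simp add: add.assoc add.commute add.left_commute)
  qed
  obtain q where "w (q + ?k) \<noteq> w (q + (?k + ?r))" using not_evper[of ?k "?k + ?r"] r_pos[of c] by auto
  thus False using per[of q] by (simp add: add.commute add.left_commute)
qed

lemma contra: False
proof -
  have l01: "l 0 \<noteq> l 1" by (rule L1)
  show False
  proof (cases "l 0 = 0")
    case False
    hence "l 0 = 1" "l 1 = 0" using l_bin[of 0] l_bin[of 1] l01 by auto
    hence "\<not> r 0 \<le> n + 1" "\<not> r 1 \<le> n + 1" using L2[of 0] L2[of 1] by auto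
    thus False using L3 by simp
  next
    case True
    hence l1: "l 1 = 1" using l_bin[of 1] l01 by auto
    show False
    proof (cases "\<exists>p. w p = 0 \<and> occ (Suc p) \<and> w (Suc p + n) = 1")
      case False
      have "w p = 0 \<Longrightarrow> occ (Suc p) \<Longrightarrow> w (Suc p + n) = 0" for p
        using False bin'[of "Suc p + n"] by auto
      thus False using per_c[of 0] True wi0 occ_i0 by blast
    next
      case E01: True
      show False
      proof (cases "\<exists>p. w p = 1 \<and> occ (Suc p) \<and> w (Suc p + n) = 0")
        case False
        have "w p = 1 \<Longrightarrow> occ (Suc p) \<Longrightarrow> w (Suc p + n) = 1" for p
          using False bin'[of "Suc p + n"] by auto
        thus False using per_c[of 1] l1 wj0 occ_j0 by blast
      next
        case True
        then obtain p1 where p1: "w p1 = 1" "occ (Suc p1)" "w (Suc p1 + n) = 0" by blast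
        obtain p0 where p0: "w p0 = 0" "occ (Suc p0)" "w (Suc p0 + n) = 1" using E01 by blast
        have a: "factor_at w i0 (Suc n) = factor_at w p0 (Suc n)"
          using p0 wi0 occ_i0 unfolding fa_Cons occ_def by simp
        have b: "factor_at w j0 (Suc n) = factor_at w p1 (Suc n)"
          using p1 wj0 occ_j0 unfolding fa_Cons occ_def by simp
        have "factor_at w i0 (Suc n) = factor_at w j0 (Suc n)"
          by (rule RS_unique[OF a _ b]) (use p0 p1 out_i0 out_j0 in simp_all)
        thus False using wi0 wj0 unfolding fa_Cons by simp
      qed
    qed
  qed
qed

end

context sturm begin
theorem NB: "\<not> unb n"
proof
  assume "unb n"
  define n0 where "n0 = (LEAST n. unb n)"
  have u: "unb n0" unfolding n0_def using \<open>unb n\<close> by (rule LeastI)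
  have mn: "n' < n0 \<Longrightarrow> \<not> unb n'" for n' unfolding n0_def using not_less_Least by blast
  obtain i j where ij: "w i = 0" "w (i+n0+1) = 0" "w j = 1" "w (j+n0+1) = 1"
    "factor_at w (Suc i) n0 = factor_at w (Suc j) n0" using u unfolding unb_def by blast
  interpret nbl w n0 i j using st mn ij by unfold_locales auto
  show False by (rule contra)
qed
end


lemma shift_app: "shift x k = x (Suc k)" by (simp add: shift_def)

lemma lexl_first_letter: "a 0 < b 0 \<Longrightarrow> lexl a b"
  unfolding lexl_def by (intro exI[of _ 0]) auto

lemma le_first_letter: "le a b \<Longrightarrow> a 0 \<le> b 0"
  unfolding le_def using lexl_first_letter[of b a] by linarith

lemma shift_lexl: "a 0 = b 0 \<Longrightarrow> lexl (shift a) (shift b) \<Longrightarrow> lexl a b"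
proof -
  assume h: "a 0 = b 0" "lexl (shift a) (shift b)"
  then obtain n where n: "\<forall>t<n. a (Suc t) = b (Suc t)" "a (Suc n) < b (Suc n)"
    unfolding lexl_def shift_app by blast
  have "\<forall>t<Suc n. a t = b t" using n(1) h(1) by (metis less_Suc_eq_0_disj)
  thus ?thesis using n(2) unfolding lexl_def by blast
qed

lemma shift_le: "a 0 = b 0 \<Longrightarrow> le a b \<Longrightarrow> le (shift a) (shift b)"
  unfolding le_def using shift_lexl by metis

context sturm begin

lemma O1:
  assumes "a \<in> om" "b \<in> om" "a 0 = 0" "b 0 = 1"
  shows "le (shift b) (shift a)"
  unfolding le_def
proof
  assume "lexl (shift a) (shift b)"
  then obtain n where n: "\<forall>t<n. a (Suc t) = b (Suc t)" "a (Suc n) < b (Suc n)"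
    unfolding lexl_def shift_app by blast
  have an: "a (Suc n) = 0" "b (Suc n) = 1" using n(2) om_bin[OF assms(1), of "Suc n"] om_bin[OF assms(2), of "Suc n"] by auto
  obtain i where i: "factor_at w i (Suc (Suc n)) = factor_at a 0 (Suc (Suc n))" using om_factor[OF assms(1)] by blast
  obtain j where j: "factor_at w j (Suc (Suc n)) = factor_at b 0 (Suc (Suc n))" using om_factor[OF assms(2)] by blast
  have wi: "w (i + t) = a t" if "t < Suc (Suc n)" for t using i that unfolding factor_at_eq_iff by simp
  have wj: "w (j + t) = b t" if "t < Suc (Suc n)" for t using j that unfolding factor_at_eq_iff by simp
  have "unb n" unfolding unb_def
  proof (intro exI conjI)
    show "w i = 0" using wi[of 0] assms(3) by simp
    show "w (i + n + 1) = 0" using wi[of "Suc n"] an by simp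
    show "w j = 1" using wj[of 0] assms(4) by simp
    show "w (j + n + 1) = 1" using wj[of "Suc n"] an by simp
    show "factor_at w (Suc i) n = factor_at w (Suc j) n"
      unfolding factor_at_eq_iff using wi[of "Suc t" for t] wj[of "Suc t" for t] n(1) by auto
  qed
  thus False using NB by blast
qed

lemma lin_case:
  assumes om: "a \<in> om" "b \<in> om" "c \<in> om" and h: "le a b" "le b c"
  shows "cW (shift a) (shift b) (shift c)"
proof -
  have f: "a 0 \<le> b 0" "b 0 \<le> c 0" using h le_first_letter by auto
  have ba: "x 0 = 0 \<or> x 0 = 1" if "x \<in> om" for x using om_bin[OF that] .
  show ?thesis
  proof (cases "a 0 = b 0")
    case True
    note ab = shift_le[OF True h(1)]
    show ?thesis
    proof (cases "b 0 = c 0")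
      case True2: True
      thus ?thesis using ab shift_le[OF True2 h(2)] unfolding cW_def by blast
    next
      case False
      hence "b 0 = 0" "c 0 = 1" using f ba[OF om(2)] ba[OF om(3)] by auto
      hence "le (shift c) (shift a)" using O1[OF om(1) om(3)] True by simp
      thus ?thesis using ab unfolding cW_def by blast
    qed
  next
    case False
    hence a0: "a 0 = 0" "b 0 = 1" using f ba[OF om(1)] ba[OF om(2)] by auto
    hence c0: "c 0 = 1" using f ba[OF om(3)] by auto
    have "le (shift b) (shift c)" using shift_le[OF _ h(2)] a0 c0 by simp
    moreover have "le (shift c) (shift a)" using O1[OF om(1) om(3)] a0 c0 by simp
    ultimately show ?thesis unfolding cW_def by blast
  qed
qed

lemma om_shift1: "x \<in> om \<Longrightarrow> shift x \<in> om"
  using om_shift[of x 1] by simp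

lemma shift_cW:
  assumes om: "a \<in> om" "b \<in> om" "c \<in> om" and h: "cW a b c"
  shows "cW (shift a) (shift b) (shift c)"
proof -
  from h consider "le a b \<and> le b c" | "le b c \<and> le c a" | "le c a \<and> le a b" unfolding cW_def by blast
  thus ?thesis
  proof cases
    case 1 thus ?thesis using lin_case[OF om] by blast
  next
    case 2 thus ?thesis using lin_case[OF om(2,3,1)] cW_rot by blast
  next
    case 3 thus ?thesis using lin_case[OF om(3,1,2)] cW_rot by blast
  qed
qed

lemma shiftn_cW:
  assumes om: "a \<in> om" "b \<in> om" "c \<in> om" and h: "cW a b c"
  shows "cW ((shift^^m) a) ((shift^^m) b) ((shift^^m) c)"
proof (induction m)
  case 0 thus ?case using h by simp
next
  case (Suc m)
  have "(shift ^^ Suc m) x = shift ((shift ^^ m) x)" for x :: "nat \<Rightarrow> nat" by simp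
  thus ?case using shift_cW[OF om_shift[OF om(1)] om_shift[OF om(2)] om_shift[OF om(3)] Suc.IH] by simp
qed

end

locale ufl =
  fixes p :: "nat set set"
  assumes uf: "ultrafilter_on_nat p"
begin

lemma UNIV_in: "UNIV \<in> p" using uf by (simp add: ultrafilter_on_nat_def)
lemma empty_notin: "{} \<notin> p" using uf by (simp add: ultrafilter_on_nat_def)
lemma up: "A \<in> p \<Longrightarrow> A \<subseteq> B \<Longrightarrow> B \<in> p" using uf unfolding ultrafilter_on_nat_def by blast
lemma inter: "A \<in> p \<Longrightarrow> B \<in> p \<Longrightarrow> A \<inter> B \<in> p" using uf unfolding ultrafilter_on_nat_def by blast
lemma compl: "A \<in> p \<or> - A \<in> p" using uf unfolding ultrafilter_on_nat_def by blast
lemma nonempty: "A \<in> p \<Longrightarrow> \<exists>x. x \<in> A" using empty_notin by (metis equals0I)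
lemma union: "A \<union> B \<in> p \<Longrightarrow> A \<in> p \<or> B \<in> p"
proof (rule ccontr)
  assume h: "A \<union> B \<in> p" "\<not> (A \<in> p \<or> B \<in> p)"
  hence "- A \<in> p" "- B \<in> p" using compl by auto
  hence "(A \<union> B) \<inter> (- A \<inter> - B) \<in> p" using h(1) inter by blast
  moreover have "(A \<union> B) \<inter> (- A \<inter> - B) = {}" by auto
  ultimately show False using empty_notin by simp
qed
lemma disj: "A \<in> p \<Longrightarrow> B \<in> p \<Longrightarrow> A \<inter> B = {} \<Longrightarrow> False"
  using inter empty_notin by fastforce

definition pl :: "(nat \<Rightarrow> nat) \<Rightarrow> nat \<Rightarrow> nat" where
  "pl x = (\<lambda>k. if {i. x (i + k) = 1} \<in> p then 1 else 0)"

lemma pl_set: assumes "\<And>n. x n = 0 \<or> x n = 1" shows "{i. x (i + k) = pl x k} \<in> p"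
proof (cases "{i. x (i + k) = 1} \<in> p")
  case True thus ?thesis by (simp add: pl_def)
next
  case False
  hence "- {i. x (i + k) = 1} \<in> p" using compl by auto
  moreover have "- {i. x (i + k) = 1} = {i. x (i + k) = 0}" using assms by auto
  ultimately show ?thesis using False by (simp add: pl_def)
qed

lemma pl_bin: "pl x k = 0 \<or> pl x k = 1" by (simp add: pl_def)

lemma pl_sets: assumes "\<And>n. x n = 0 \<or> x n = 1" shows "{i. \<forall>t<K. x (i + t) = pl x t} \<in> p"
proof (induction K)
  case 0 thus ?case using UNIV_in by simp
next
  case (Suc K)
  have "{i. \<forall>t<K. x (i + t) = pl x t} \<inter> {i. x (i + K) = pl x K} \<in> p"
    using inter[OF Suc pl_set[OF assms]] .
  moreover have "{i. \<forall>t<K. x (i + t) = pl x t} \<inter> {i. x (i + K) = pl x K} = {i. \<forall>t<Suc K. x (i + t) = pl x t}"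
    by (auto simp: less_Suc_eq)
  ultimately show ?case by simp
qed

lemma pstar_eq: assumes b: "\<And>n. x n = 0 \<or> x n = 1" shows "pstar p x = pl x"
  unfolding pstar_def
proof (rule the_equality)
  show "\<forall>u. u \<noteq> [] \<longrightarrow> is_prefix u (pl x) = (occurrences x u \<in> p)"
  proof (intro allI impI)
    fix u :: "nat list" assume "u \<noteq> []"
    let ?K = "length u"
    have occ: "occurrences x u = {i. factor_at x i ?K = u}" by (simp add: occurrences_def)
    have mp: "map (pl x) [0..<?K] = factor_at (pl x) 0 ?K" by (simp add: factor_at_def)
    have S: "{i. factor_at x i ?K = map (pl x) [0..<?K]} = {i. \<forall>t<?K. x (i + t) = pl x t}"
      unfolding mp factor_at_eq_iff by simp
    show "is_prefix u (pl x) = (occurrences x u \<in> p)"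
    proof
      assume "is_prefix u (pl x)"
      hence "u = map (pl x) [0..<?K]" by (simp add: is_prefix_def)
      hence "occurrences x u = {i. factor_at x i ?K = map (pl x) [0..<?K]}" using occ by simp
      thus "occurrences x u \<in> p" using pl_sets[OF b, of ?K] S by simp
    next
      assume h: "occurrences x u \<in> p"
      show "is_prefix u (pl x)"
      proof (rule ccontr)
        assume "\<not> is_prefix u (pl x)"
        hence ne: "map (pl x) [0..<?K] \<noteq> u" by (simp add: is_prefix_def)
        have "{i. factor_at x i ?K = map (pl x) [0..<?K]} \<in> p" using pl_sets[OF b, of ?K] S by simp
        moreover have "{i. factor_at x i ?K = map (pl x) [0..<?K]} \<inter> {i. factor_at x i ?K = u} = {}" using ne by auto
        ultimately show False using disj h occ by simp
      qed
    qed
  qed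
next
  fix z assume hz: "\<forall>u. u \<noteq> [] \<longrightarrow> is_prefix u z = (occurrences x u \<in> p)"
  show "z = pl x"
  proof
    fix k
    let ?u = "map z [0..<Suc k]"
    have "is_prefix ?u z" by (simp add: is_prefix_def)
    hence A: "occurrences x ?u \<in> p" using hz by simp
    have B: "occurrences x (map (pl x) [0..<Suc k]) \<in> p"
    proof -
      have "{i. factor_at x i (Suc k) = map (pl x) [0..<Suc k]} = {i. \<forall>t<Suc k. x (i + t) = pl x t}"
        by (auto simp: list_eq_iff_nth_eq simp del: upt_Suc)
      thus ?thesis using pl_sets[OF b, of "Suc k"] by (simp add: occurrences_def del: upt_Suc)
    qed
    have "?u = map (pl x) [0..<Suc k]"
    proof (rule ccontr)
      assume ne: "?u \<noteq> map (pl x) [0..<Suc k]"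
      have "occurrences x ?u \<inter> occurrences x (map (pl x) [0..<Suc k]) = {}"
        using ne by (auto simp: occurrences_def simp del: upt_Suc)
      thus False using disj A B by blast
    qed
    hence "?u ! k = map (pl x) [0..<Suc k] ! k" by (simp del: upt_Suc)
    thus "z k = pl x k" by (simp del: upt_Suc)
  qed
qed

lemma pl_shift: "pl ((shift ^^ m) x) = (shift ^^ m) (pl x)"
  unfolding shift_pow pl_def by (simp add: add.assoc)

lemma pl_idem: assumes idem: "ultra_plus p p = p" shows "pl (pl x) = pl x"
proof
  fix k
  have "pl x k = 1 \<longleftrightarrow> {i. x (i + k) = 1} \<in> p" by (simp add: pl_def)
  also have "\<dots> \<longleftrightarrow> {i. x (i + k) = 1} \<in> ultra_plus p p" using idem by simp
  also have "\<dots> \<longleftrightarrow> {j. {i. x (i + (j + k)) = 1} \<in> p} \<in> p"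
    unfolding ultra_plus_def minus_set_def by (simp add: add.assoc)
  also have "\<dots> \<longleftrightarrow> {j. pl x (j + k) = 1} \<in> p" by (simp add: pl_def)
  also have "\<dots> \<longleftrightarrow> pl (pl x) k = 1" by (simp add: pl_def)
  finally show "pl (pl x) k = pl x k" using pl_bin[of x k] pl_bin[of "pl x" k] by auto
qed

lemma le_lim:
  assumes ba: "\<And>n. a n = 0 \<or> a n = 1" and bb: "\<And>n. b n = 0 \<or> b n = 1"
    and h: "{i. le ((shift^^i) a) ((shift^^i) b)} \<in> p"
  shows "le (pl a) (pl b)"
  unfolding le_def
proof
  assume "lexl (pl b) (pl a)"
  then obtain n where n: "\<forall>t<n. pl b t = pl a t" "pl b n < pl a n" unfolding lexl_def by blast
  have nb: "pl b n = 0" "pl a n = 1" using n(2) pl_bin[of b n] pl_bin[of a n] by auto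
  have "{i. \<forall>t<Suc n. a (i + t) = pl a t} \<inter> {i. \<forall>t<Suc n. b (i + t) = pl b t} \<inter> {i. le ((shift^^i) a) ((shift^^i) b)} \<in> p"
    using inter[OF inter[OF pl_sets[OF ba] pl_sets[OF bb]] h] .
  from nonempty[OF this] obtain i where "i \<in> {i. \<forall>t<Suc n. a (i + t) = pl a t} \<inter> {i. \<forall>t<Suc n. b (i + t) = pl b t} \<inter> {i. le ((shift^^i) a) ((shift^^i) b)}" ..
  hence i: "\<forall>t<Suc n. a (i + t) = pl a t" "\<forall>t<Suc n. b (i + t) = pl b t" "le ((shift^^i) a) ((shift^^i) b)"
    by auto
  have "lexl ((shift^^i) b) ((shift^^i) a)" unfolding lexl_def shift_pow
  proof (intro exI conjI allI impI)
    fix t assume "t < n"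
    hence "b (i + t) = pl b t" "a (i + t) = pl a t" "pl b t = pl a t" using i n(1) by auto
    thus "b (t + i) = a (t + i)" by (simp add: add.commute)
  next
    have "b (i + n) = pl b n" "a (i + n) = pl a n" using i by auto
    thus "b (n + i) < a (n + i)" using nb by (simp add: add.commute)
  qed
  thus False using i(3) unfolding le_def by blast
qed

lemma cW_lim:
  assumes ba: "\<And>n. a n = 0 \<or> a n = 1" and bb: "\<And>n. b n = 0 \<or> b n = 1" and bc: "\<And>n. c n = 0 \<or> c n = 1"
    and h: "\<And>i. cW ((shift^^i) a) ((shift^^i) b) ((shift^^i) c)"
  shows "cW (pl a) (pl b) (pl c)"
proof -
  let ?T = "\<lambda>i x. (shift^^i) x"
  let ?C1 = "{i. le (?T i a) (?T i b) \<and> le (?T i b) (?T i c)}"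
  let ?C2 = "{i. le (?T i b) (?T i c) \<and> le (?T i c) (?T i a)}"
  let ?C3 = "{i. le (?T i c) (?T i a) \<and> le (?T i a) (?T i b)}"
  have "?C1 \<union> ?C2 \<union> ?C3 = UNIV"
  proof -
    have "i \<in> ?C1 \<union> ?C2 \<union> ?C3" for i using h[of i] unfolding cW_def by simp
    thus ?thesis by blast
  qed
  hence "?C1 \<union> ?C2 \<union> ?C3 \<in> p" using UNIV_in by simp
  hence "?C1 \<in> p \<or> ?C2 \<in> p \<or> ?C3 \<in> p" using union by blast
  thus ?thesis
  proof (elim disjE)
    assume "?C1 \<in> p"
    hence "{i. le (?T i a) (?T i b)} \<in> p" "{i. le (?T i b) (?T i c)} \<in> p" by (auto elim: up)
    hence "le (pl a) (pl b)" "le (pl b) (pl c)" using le_lim[OF ba bb] le_lim[OF bb bc] by auto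
    thus ?thesis unfolding cW_def by blast
  next
    assume "?C2 \<in> p"
    hence "{i. le (?T i b) (?T i c)} \<in> p" "{i. le (?T i c) (?T i a)} \<in> p" by (auto elim: up)
    hence "le (pl b) (pl c)" "le (pl c) (pl a)" using le_lim[OF bb bc] le_lim[OF bc ba] by auto
    thus ?thesis unfolding cW_def by blast
  next
    assume "?C3 \<in> p"
    hence "{i. le (?T i c) (?T i a)} \<in> p" "{i. le (?T i a) (?T i b)} \<in> p" by (auto elim: up)
    hence "le (pl c) (pl a)" "le (pl a) (pl b)" using le_lim[OF bc ba] le_lim[OF ba bb] by auto
    thus ?thesis unfolding cW_def by blast
  qed
qed

end

lemma lexl_close:
  assumes ag: "\<forall>t<L. a t = a' t" and d: "d < L" "a d \<noteq> b d"
  shows "lexl a b \<longleftrightarrow> lexl a' b" and "lexl b a \<longleftrightarrow> lexl b a'"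
proof -
  have tr: "lexl u v \<Longrightarrow> \<forall>t<L. u t = u' t \<Longrightarrow> \<forall>t<L. v t = v' t \<Longrightarrow> d < L \<Longrightarrow> u d \<noteq> v d \<Longrightarrow> lexl u' v'"
    for u v u' v'
  proof -
    assume h: "lexl u v" "\<forall>t<L. u t = u' t" "\<forall>t<L. v t = v' t" "d < L" "u d \<noteq> v d"
    then obtain n where n: "\<forall>t<n. u t = v t" "u n < v n" unfolding lexl_def by blast
    have "n \<le> d" using n(1) h(5) by (metis not_le)
    hence "n < L" using h(4) by simp
    hence "\<forall>t<n. u' t = v' t" "u' n < v' n" using n h(2,3) by auto
    thus "lexl u' v'" unfolding lexl_def by blast
  qed
  have ag': "\<forall>t<L. a' t = a t" using ag by simp
  have d': "a' d \<noteq> b d" using ag d by simp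
  have bb: "\<forall>t<L. b t = b t" by simp
  show "lexl a b \<longleftrightarrow> lexl a' b" using tr[OF _ ag bb d] tr[OF _ ag' bb d(1) d'] by blast
  show "lexl b a \<longleftrightarrow> lexl b a'" using tr[OF _ bb ag d(1)] tr[OF _ bb ag' d(1)] d d' by metis
qed

lemma cS_close:
  assumes ag: "\<forall>t<L. a t = a' t" and d1: "d1 < L" "a d1 \<noteq> z d1" and d2: "d2 < L" "a d2 \<noteq> b d2"
  shows "cS z a b \<longleftrightarrow> cS z a' b"
  unfolding cS_def using lexl_close[where L=L and a=a and a'=a' and d=d1 and b=z, OF ag d1]
    lexl_close[where L=L and a=a and a'=a' and d=d2 and b=b, OF ag d2] by simp

lemma cS_cases: "a \<noteq> b \<Longrightarrow> b \<noteq> c \<Longrightarrow> a \<noteq> c \<Longrightarrow> cS a b c \<or> cS a c b"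
  unfolding cS_def by (metis lexl_props)

context sturm begin

lemma evp_contra: "(shift^^a) w = (shift^^b) w \<Longrightarrow> a < b \<Longrightarrow> False"
proof -
  assume h: "(shift^^a) w = (shift^^b) w" "a < b"
  have "w (n + a) = w (n + b)" for n using fun_cong[OF h(1), of n] by (simp add: shift_pow)
  thus False using not_evper[OF h(2)] by blast
qed

lemma ret_mult:
  assumes q: "q \<ge> 1" shows "\<exists>m\<ge>1. \<forall>t<L. w (q * m + t) = w t"
proof -
  define R where "R P = (SOME s. s \<ge> 1 \<and> factor_at w s P = factor_at w 0 P)" for P
  have R: "R P \<ge> 1" "factor_at w (R P) P = factor_at w 0 P" for P
    using someI_ex[OF prefix_recur[of P]] unfolding R_def by auto
  define S where "S = rec_nat 0 (\<lambda>k sk. sk + R (L + sk))"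
  have S0: "S 0 = 0" and SS: "S (Suc k) = S k + R (L + S k)" for k unfolding S_def by simp_all
  have mono: "S a \<le> S b" if "a \<le> b" for a b using that
  proof (induction b)
    case 0 thus ?case by simp
  next
    case (Suc b) thus ?case using SS[of b] by (auto simp: le_Suc_eq)
  qed
  have smono: "S a < S b" if "a < b" for a b
  proof -
    have "S a \<le> S (b - 1)" using mono that by simp
    moreover have "S (b - 1) < S b" using SS[of "b - 1"] R(1)[of "L + S (b - 1)"] that by simp
    ultimately show ?thesis by simp
  qed
  have retS: "\<forall>t<L. w (S b - S a + t) = w t" if "a \<le> b" for a b using that
  proof (induction b)
    case 0 thus ?case by simp
  next
    case (Suc b)
    show ?case
    proof (cases "a = Suc b")
      case True thus ?thesis by simp
    next
      case False
      hence ab: "a \<le> b" using Suc.prems by simp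
      have IH: "\<forall>t<L. w (S b - S a + t) = w t" using Suc.IH[OF ab] .
      have sa: "S a \<le> S b" using mono[OF ab] .
      show ?thesis
      proof (intro allI impI)
        fix t assume "t < L"
        let ?s = "R (L + S b)"
        have eq: "S (Suc b) - S a + t = ?s + (S b - S a + t)" using SS[of b] sa by simp
        have "S b - S a + t < L + S b" using \<open>t < L\<close> sa by simp
        hence "w (?s + (S b - S a + t)) = w (0 + (S b - S a + t))"
          using R(2)[of "L + S b"] unfolding factor_at_eq_iff by blast
        thus "w (S (Suc b) - S a + t) = w t" using eq IH \<open>t < L\<close> by (simp add: add.assoc)
      qed
    qed
  qed
  have "\<not> inj_on (\<lambda>k. S k mod q) {..q}"
  proof
    assume "inj_on (\<lambda>k. S k mod q) {..q}"
    moreover have "(\<lambda>k. S k mod q) ` {..q} \<subseteq> {..<q}" using q by auto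
    ultimately have "card {..q} \<le> card {..<q}" by (rule card_inj_on_le) simp
    thus False by simp
  qed
  then obtain a b where ab: "a \<le> q" "b \<le> q" "a \<noteq> b" "S a mod q = S b mod q"
    unfolding inj_on_def by blast
  obtain a' b' where a'b': "a' < b'" "S a' mod q = S b' mod q"
  proof (cases "a < b")
    case True thus ?thesis using that ab by blast
  next
    case False thus ?thesis using that[of b a] ab by auto
  qed
  have lt: "S a' < S b'" using smono[OF a'b'(1)] .
  have "q dvd S b' - S a'" using mod_eq_dvd_iff_nat[of "S a'" "S b'" q] a'b'(2) lt by simp
  then obtain m where m: "S b' - S a' = q * m" by (auto elim: dvdE)
  have "m \<ge> 1" using m lt by (cases m) auto
  moreover have "\<forall>t<L. w (q * m + t) = w t" using retS[of a' b'] a'b'(1) m by simp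
  ultimately show ?thesis by blast
qed

end

context sturm begin

lemma shift_add: "(shift^^a) ((shift^^b) x) = (shift^^(a + b)) x"
  by (simp add: funpow_add)

lemma no_periodic:
  assumes z: "z \<in> om" and q: "q \<ge> 1" and per: "(shift^^q) z = z"
  shows False
proof -
  define x where "x n = (shift^^(q * n)) w" for n
  have xom: "x n \<in> om" for n unfolding x_def by (rule shift_w_om)
  have xs: "(shift^^q) (x n) = x (Suc n)" for n unfolding x_def shift_add by (simp add: add.commute)
  have xz: "x n \<noteq> z" for n
  proof
    assume "x n = z"
    hence "x (Suc n) = x n" using xs[of n] per by simp
    thus False unfolding x_def using evp_contra[of "q * n" "q * Suc n"] q by simp
  qed
  have xd: "a < b \<Longrightarrow> x a \<noteq> x b" for a b
    unfolding x_def using evp_contra[of "q * a" "q * b"] q by auto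
  have step: "cW z (x n) (x (Suc n)) \<Longrightarrow> cW z (x (Suc n)) (x (Suc (Suc n)))" for n
    using shiftn_cW[OF z xom[of n] xom[of "Suc n"], where m = q] per xs by simp
  have dist: "cW z (x a) (x b) \<Longrightarrow> a \<noteq> b \<Longrightarrow> cS z (x a) (x b)" for a b
    using cW_distinct_cS xz xd by (metis nat_neq_iff)
  have cW_S: "cS a b c \<Longrightarrow> cW a b c" for a b c by (rule cS_imp_cW)
  obtain d1 where d1: "w d1 \<noteq> z d1" using xz[of 0] unfolding x_def by auto
  obtain d2 where d2: "w d2 \<noteq> x 1 d2" using xd[of 0 1] unfolding x_def by auto
  define L where "L = Suc (max d1 d2)"
  obtain m where m: "m \<ge> 1" "\<forall>t<L. w (q * m + t) = w t" using ret_mult[OF q] by blast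
  have ag: "\<forall>t<L. w t = x m t" using m(2) unfolding x_def shift_pow by (simp add: add.commute)
  have close: "cS z w (x 1) \<longleftrightarrow> cS z (x m) (x 1)"
    by (rule cS_close[OF ag, of d1 z d2 "x 1"]) (use d1 d2 L_def in auto)
  have x0: "x 0 = w" unfolding x_def by simp
  have "x 0 \<noteq> x 1" using xd by simp
  from cS_cases[OF xz[of 0, symmetric] this xz[of 1, symmetric]]
  show False
  proof
    assume A: "cS z (x 0) (x 1)"
    have mono: "cS z (x n) (x (Suc n))" for n
    proof (induction n)
      case 0 thus ?case using A by simp
    next
      case (Suc n) thus ?case using step[OF cW_S[OF Suc.IH]] dist by simp
    qed
    have chain: "n \<ge> 2 \<Longrightarrow> cS z (x 1) (x n)" for n
    proof (induction n)
      case 0 thus ?case by simp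
    next
      case (Suc n)
      show ?case
      proof (cases "n = 1")
        case True thus ?thesis using mono[of 1] by simp
      next
        case False hence "n \<ge> 2" using Suc.prems by simp
        thus ?thesis using cS_trans[OF Suc.IH mono[of n]] by simp
      qed
    qed
    have "cS z (x m) (x 1)" using close A x0 by simp
    moreover have "m \<noteq> 1" using calculation cS_distinct by blast
    ultimately show False using chain[of m] m(1) cS_asym by fastforce
  next
    assume B: "cS z (x 1) (x 0)"
    have mono: "cS z (x (Suc n)) (x n)" for n
    proof (induction n)
      case 0 thus ?case using B by simp
    next
      case (Suc n)
      have "cW z (x (Suc n)) (x (Suc (Suc n))) \<longleftrightarrow> \<not> cS z (x (Suc (Suc n))) (x (Suc n))"
        by (rule cW_iff_not_cS)
      have "cW z (x (Suc n)) (x n)" using cW_S[OF Suc.IH] .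
      have h1: "cW (x (Suc n)) (x n) z" using cW_S[OF Suc.IH] cW_rot by blast
      have "cW ((shift^^q) (x (Suc n))) ((shift^^q) (x n)) ((shift^^q) z)"
        by (rule shiftn_cW[OF xom xom z h1])
      hence "cW (x (Suc (Suc n))) (x (Suc n)) z" using xs per by simp
      hence "cW z (x (Suc (Suc n))) (x (Suc n))" using cW_rot by blast
      thus ?case using dist by simp
    qed
    have chain: "n \<ge> 2 \<Longrightarrow> cS z (x n) (x 1)" for n
    proof (induction n)
      case 0 thus ?case by simp
    next
      case (Suc n)
      show ?case
      proof (cases "n = 1")
        case True thus ?thesis using mono[of 1] by simp
      next
        case False hence "n \<ge> 2" using Suc.prems by simp
        thus ?thesis using cS_trans[OF mono[of n] Suc.IH] by simp
      qed
    qed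
    have closeB: "cS z (x 1) w \<longleftrightarrow> cS z (x 1) (x m)"
    proof -
      have "cS z (x 1) w \<longleftrightarrow> cS (x 1) w z" using cS_rot by blast
      also have "\<dots> \<longleftrightarrow> cS (x 1) (x m) z"
        by (rule cS_close[OF ag, of d2 "x 1" d1 z]) (use d1 d2 L_def in auto)
      also have "\<dots> \<longleftrightarrow> cS z (x 1) (x m)" using cS_rot by blast
      finally show ?thesis .
    qed
    have "cS z (x 1) (x m)" using closeB B x0 by simp
    moreover have "m \<noteq> 1" using calculation cS_distinct by blast
    ultimately show False using chain[of m] m(1) cS_asym by fastforce
  qed
qed

end

context sturm begin

definition Adj where "Adj a b \<longleftrightarrow> (\<forall>x\<in>om. \<not> cS a x b)"

lemma shift_pre: "shift (\<lambda>n. if n = 0 then c else x (n - 1)) = x"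
  by (simp add: shift_def)

lemma adj_shift:
  assumes om: "a \<in> om" "b \<in> om" and adj: "Adj a b"
  shows "Adj (shift a) (shift b)"
  unfolding Adj_def
proof (intro ballI notI)
  fix x assume xom: "x \<in> om" and s: "cS (shift a) x (shift b)"
  obtain c where c: "(\<lambda>n. if n = 0 then c else x (n - 1)) \<in> om" using om_preimage[OF xom] by blast
  define x' where "x' = (\<lambda>n. if n = 0 then c else x (n - 1))"
  have x'om: "x' \<in> om" and sx': "shift x' = x" using c shift_pre unfolding x'_def by auto
  have ds: "shift a \<noteq> x" "x \<noteq> shift b" "shift a \<noteq> shift b" using cS_distinct[OF s] by auto
  show False
  proof (cases "cW a x' b")
    case True
    have "a \<noteq> x'" "x' \<noteq> b" "a \<noteq> b" using ds sx' by auto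
    hence "cS a x' b" using cW_distinct_cS[OF True] by blast
    thus False using adj x'om unfolding Adj_def by blast
  next
    case False
    hence "cS a b x'" using cW_iff_not_cS by blast
    hence "cW a b x'" by (rule cS_imp_cW)
    hence "cW (shift a) (shift b) (shift x')" by (rule shift_cW[OF om x'om])
    hence "\<not> cS (shift a) x (shift b)" using cW_iff_not_cS sx' by blast
    thus False using s by blast
  qed
qed

lemma adj_shiftn: "a \<in> om \<Longrightarrow> b \<in> om \<Longrightarrow> Adj a b \<Longrightarrow> Adj ((shift^^k) a) ((shift^^k) b)"
proof (induction k)
  case 0 thus ?case by simp
next
  case (Suc k)
  thus ?case using adj_shift[OF om_shift[OF Suc.prems(1)] om_shift[OF Suc.prems(2)] Suc.IH[OF Suc.prems]] by simp
qed

definition nevp where "nevp u \<longleftrightarrow> (\<forall>k k'. k < k' \<longrightarrow> (shift^^k) u \<noteq> (shift^^k') u)"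

lemma adj_asym:
  assumes om: "a \<in> om" "b \<in> om" and ne: "a \<noteq> b" and adj: "Adj a b" and na: "nevp a"
  shows "\<exists>d. (shift^^(Suc d)) a = (shift^^(Suc d)) b \<and> a d \<noteq> b d"
proof -
  define D where "D = {k. a k \<noteq> b k}"
  have claim: "k < k' \<Longrightarrow> k \<in> D \<Longrightarrow> k' \<in> D \<Longrightarrow> a k = a k' \<Longrightarrow> False" for k k'
  proof -
    assume h: "k < k'" "k \<in> D" "k' \<in> D" "a k = a k'"
    let ?A = "(shift^^k) a" and ?B = "(shift^^k) b" and ?A' = "(shift^^k') a" and ?B' = "(shift^^k') b"
    have oms: "?A \<in> om" "?B \<in> om" "?A' \<in> om" "?B' \<in> om" using om om_shift by auto
    have adjs: "Adj ?A ?B" "Adj ?A' ?B'" using adj_shiftn[OF om adj] by auto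
    have f: "?A 0 = a k" "?B 0 = b k" "?A' 0 = a k'" "?B' 0 = b k'" by (simp_all add: shift_pow)
    have neq: "?A \<noteq> ?A'" using na h(1) unfolding nevp_def by blast
    have bin2: "a k = 0 \<or> a k = 1" "b k = 0 \<or> b k = 1" "b k' = 0 \<or> b k' = 1"
      using om_bin[OF om(1)] om_bin[OF om(2)] by auto
    have bk: "b k = b k'" using h bin2 om_bin[OF om(1), of k'] unfolding D_def by auto
    show False
    proof (cases "a k = 0")
      case True
      hence b1: "b k = 1" using h(2) bin2 unfolding D_def by auto
      have l1: "lexl ?A' ?B" "lexl ?A ?B'" using f True b1 h(4) bk by (auto intro!: lexl_first_letter)
      from lexl_total[OF neq] show False
      proof
        assume "lexl ?A ?A'"
        hence "cS ?A ?A' ?B" using l1 unfolding cS_def by blast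
        thus False using adjs oms unfolding Adj_def by blast
      next
        assume "lexl ?A' ?A"
        hence "cS ?A' ?A ?B'" using l1 unfolding cS_def by blast
        thus False using adjs oms unfolding Adj_def by blast
      qed
    next
      case False
      hence a1: "a k = 1" using bin2 by auto
      hence b0: "b k = 0" using h(2) bin2 unfolding D_def by auto
      have l1: "lexl ?B ?A" "lexl ?B' ?A'" using f a1 b0 h(4) bk by (auto intro!: lexl_first_letter)
      from lexl_total[OF neq] show False
      proof
        assume "lexl ?A ?A'"
        hence "cS ?A ?A' ?B" using l1 unfolding cS_def by blast
        thus False using adjs oms unfolding Adj_def by blast
      next
        assume "lexl ?A' ?A"
        hence "cS ?A' ?A ?B'" using l1 unfolding cS_def by blast
        thus False using adjs oms unfolding Adj_def by blast
      qed
    qed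
  qed
  have fin: "finite D"
  proof -
    have sub: "D \<subseteq> {k\<in>D. a k = 0} \<union> {k\<in>D. a k = 1}" using om_bin[OF om(1)] by auto
    have "finite {k\<in>D. a k = e}" for e
    proof (rule ccontr)
      assume "infinite {k\<in>D. a k = e}"
      hence "\<not> (\<exists>m. \<forall>n\<in>{k\<in>D. a k = e}. n \<le> m)" using finite_nat_set_iff_bounded_le by blast
      hence unb: "\<forall>m. \<exists>n>m. n \<in> {k\<in>D. a k = e}" by (auto simp: not_le)
      then obtain k1 where k1: "k1 \<in> {k\<in>D. a k = e}" by blast
      then obtain k2 where k2: "k2 > k1" "k2 \<in> {k\<in>D. a k = e}" using unb by blast
      show False using claim[of k1 k2] k1 k2 by auto
    qed
    thus ?thesis using sub finite_subset by blast
  qed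
  have "D \<noteq> {}" using ne unfolding D_def by auto
  define d where "d = Max D"
  have dD: "d \<in> D" unfolding d_def using fin \<open>D \<noteq> {}\<close> by simp
  have after: "k > d \<Longrightarrow> a k = b k" for k using Max_ge[OF fin, of k] unfolding d_def D_def by fastforce
  have "(shift^^(Suc d)) a = (shift^^(Suc d)) b" unfolding shift_pow using after by auto
  thus ?thesis using dD unfolding D_def by blast
qed

lemma char_unique:
  assumes "is_characteristic w x" "is_characteristic w x'" shows "x = x'"
proof
  fix k
  show "x k = x' k"
  proof (rule ccontr)
    assume ne: "x k \<noteq> x' k"
    let ?u = "map x [0..<Suc k]" and ?u' = "map x' [0..<Suc k]"
    have ls: "left_special ?u w" "left_special ?u' w" using assms unfolding is_characteristic_def by blast+
    have pos: "\<exists>i i'. factor_at w (Suc i) (Suc k) = u \<and> factor_at w (Suc i') (Suc k) = u \<and> w i = 0 \<and> w i' = 1"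
      if hl: "left_special u w" "length u = Suc k" for u
    proof -
      obtain i where i: "factor_at w i (Suc (Suc k)) = 0 # u" using hl unfolding left_special_def is_factor_def by auto
      obtain i' where i': "factor_at w i' (Suc (Suc k)) = 1 # u" using hl unfolding left_special_def is_factor_def by auto
      show ?thesis using i i' unfolding fa_Cons by auto
    qed
    obtain i i' where a: "factor_at w (Suc i) (Suc k) = ?u" "factor_at w (Suc i') (Suc k) = ?u" "w i = 0" "w i' = 1"
      using pos[OF ls(1)] by auto
    obtain j j' where b: "factor_at w (Suc j) (Suc k) = ?u'" "factor_at w (Suc j') (Suc k) = ?u'" "w j = 0" "w j' = 1"
      using pos[OF ls(2)] by auto
    have "factor_at w (Suc i) (Suc k) = factor_at w (Suc j) (Suc k)"
      by (rule LS_unique[where i=i and i'=i' and j=j and j'=j']) (use a b in auto)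
    hence "?u = ?u'" using a b by simp
    hence "\<forall>t\<in>set [0..<Suc k]. x t = x' t" by (simp only: map_eq_conv)
    moreover have "k \<in> set [0..<Suc k]" by (simp del: upt_Suc)
    ultimately show False using ne by blast
  qed
qed

lemma singular_of:
  assumes yom: "y \<in> om" and d: "(shift^^(Suc d)) w = (shift^^(Suc d)) y" "w d \<noteq> y d"
  shows "singular w"
proof -
  let ?x = "(shift^^(Suc d)) w"
  have ch: "is_characteristic w ?x"
    unfolding is_characteristic_def
  proof (intro conjI allI)
    show "?x \<in> om" by (rule shift_w_om)
    fix k
    let ?u = "map ?x [0..<k]"
    have u0: "?u = factor_at ?x 0 k" by (simp add: factor_at_def)
    have u: "?u = factor_at w (Suc d) k" unfolding u0 unfolding factor_at_eq_iff shift_pow by (simp add: add.commute)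
    have uy: "?u = factor_at y (Suc d) k" unfolding u0 unfolding d(1) unfolding factor_at_eq_iff shift_pow by (simp add: add.commute)
    obtain i where i: "factor_at w i (Suc k) = factor_at y d (Suc k)" using om_factor[OF yom] by blast
    have f1: "factor_at w d (Suc k) = w d # ?u" unfolding fa_Cons u ..
    have f2: "factor_at w i (Suc k) = y d # ?u"
    proof -
      have "factor_at w i (Suc k) = factor_at y d (Suc k)" by (rule i)
      also have "\<dots> = y d # factor_at y (Suc d) k" by (rule fa_Cons)
      also have "\<dots> = y d # ?u" using uy by simp
      finally show ?thesis .
    qed
    have bb: "w d = 0 \<or> w d = 1" "y d = 0 \<or> y d = 1" using bin' om_bin[OF yom] by auto
    have len: "length (c # ?u) = Suc k" for c :: nat by simp
    have "(w d = 0 \<and> y d = 1) \<or> (w d = 1 \<and> y d = 0)" using bb d(2) by auto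
    thus "left_special ?u w" unfolding left_special_def is_factor_def len
    proof
      assume "w d = 0 \<and> y d = 1"
      thus "(\<exists>i. factor_at w i (Suc k) = 0 # ?u) \<and> (\<exists>i. factor_at w i (Suc k) = 1 # ?u)"
        using f1 f2 by auto
    next
      assume "w d = 1 \<and> y d = 0"
      thus "(\<exists>i. factor_at w i (Suc k) = 0 # ?u) \<and> (\<exists>i. factor_at w i (Suc k) = 1 # ?u)"
        using f1 f2 by auto
    qed
  qed
  have "characteristic w = ?x" unfolding characteristic_def
  proof (rule the_equality)
    show "is_characteristic w ?x" by (rule ch)
    fix z assume "is_characteristic w z" thus "z = ?x" using char_unique ch by blast
  qed
  thus ?thesis unfolding singular_def by (intro exI[of _ "Suc d"]) auto
qed

lemma arc_orbit:
  assumes xom: "x \<in> om" and s: "cS a x b"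
  shows "\<exists>s\<ge>1. cS a ((shift^^s) w) b"
proof -
  have "x \<noteq> a" "x \<noteq> b" using cS_distinct[OF s] by auto
  then obtain d1 d2 where d1: "x d1 \<noteq> a d1" and d2: "x d2 \<noteq> b d2" by (meson ext)
  define L where "L = Suc (max d1 d2)"
  obtain i where "factor_at w i L = factor_at x 0 L" using om_factor[OF xom] by blast
  then obtain s where s1: "s \<ge> 1" "factor_at w s L = factor_at x 0 L" using recur1 by metis
  have ag: "\<forall>t<L. x t = (shift^^s) w t" using s1(2) unfolding factor_at_eq_iff shift_pow by (simp add: add.commute)
  have "cS a x b \<longleftrightarrow> cS a ((shift^^s) w) b"
    by (rule cS_close[OF ag, of d1 a d2 b]) (use d1 d2 L_def in auto)
  thus ?thesis using s s1(1) by blast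
qed

end

locale mainl = sturm w + ufl p for w p +
  assumes idem: "ultra_plus p p = p" and nonsing: "\<not> singular w"
begin

lemma sbin: "(shift^^i) w n = 0 \<or> (shift^^i) w n = 1" unfolding shift_pow by (rule bin')

lemma yom: "pl w \<in> om"
  unfolding om_iff
proof
  fix k
  from nonempty[OF pl_sets[where x = w, OF bin', of k]] obtain i where "\<forall>t<k. w (i + t) = pl w t" by auto
  hence "factor_at w i k = factor_at (pl w) 0 k" unfolding factor_at_eq_iff by simp
  thus "\<exists>i. factor_at w i k = factor_at (pl w) 0 k" by blast
qed

lemma ynevp: "nevp (pl w)"
  unfolding nevp_def
proof (intro allI impI notI)
  fix a b assume ab: "a < b" "(shift^^a) (pl w) = (shift^^b) (pl w)"
  let ?z = "(shift^^a) (pl w)"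
  have A: "?z \<in> om" using om_shift[OF yom] .
  have B: "(shift^^(b - a)) ?z = ?z"
  proof -
    have "(shift^^(b - a)) ?z = (shift^^(b - a + a)) (pl w)" by (rule shift_add)
    also have "b - a + a = b" using ab(1) by simp
    finally show ?thesis using ab(2) by simp
  qed
  have C: "b - a \<ge> 1" using ab(1) by simp
  show False by (rule no_periodic[OF A C B])
qed

lemma wnevp: "nevp w"
  unfolding nevp_def using evp_contra by blast

lemma main: "pl w = w"
proof (rule ccontr)
  assume ne: "pl w \<noteq> w"
  let ?y = "pl w"
  let ?T = "\<lambda>i x. (shift^^i) x"
  have arc1: "\<exists>i\<ge>1. cS w (?T i w) ?y"
  proof (rule ccontr)
    assume na: "\<not> ?thesis"
    have "Adj w ?y" unfolding Adj_def
    proof (intro ballI notI)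
      fix x assume "x \<in> om" "cS w x ?y"
      from arc_orbit[OF this] show False using na by blast
    qed
    from adj_asym[OF w_om yom ne[symmetric] this wnevp]
    obtain d where "?T (Suc d) w = ?T (Suc d) ?y" "w d \<noteq> ?y d" by blast
    thus False using singular_of[OF yom] nonsing by blast
  qed
  have arc2: "\<exists>j\<ge>1. cS ?y (?T j w) w"
  proof (rule ccontr)
    assume na: "\<not> ?thesis"
    have "Adj ?y w" unfolding Adj_def
    proof (intro ballI notI)
      fix x assume "x \<in> om" "cS ?y x w"
      from arc_orbit[OF this] show False using na by blast
    qed
    from adj_asym[OF yom w_om ne this ynevp]
    obtain d where "?T (Suc d) ?y = ?T (Suc d) w" "?y d \<noteq> w d" by blast
    thus False using singular_of[OF yom, of d] nonsing by auto
  qed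
  obtain i where i: "i \<ge> 1" "cS w (?T i w) ?y" using arc1 by blast
  obtain j where j: "j \<ge> 1" "cS ?y (?T j w) w" using arc2 by blast
  have four: "cS w (?T i w) (?T j w)" "cS (?T i w) ?y (?T j w)" using cS_four[OF i(2) j(2)] by auto
  have ij: "i \<noteq> j" using cS_distinct[OF four(1)] by auto
  have xom: "?T i w \<in> om" and zom: "?T j w \<in> om" by (rule shift_w_om)+
  have c1: "cW ?y (?T i ?y) (?T j ?y)"
  proof -
    have "cW (pl w) (pl (?T i w)) (pl (?T j w))"
    proof (rule cW_lim)
      show "\<And>n. w n = 0 \<or> w n = 1" by (rule bin')
      show "\<And>n. ?T i w n = 0 \<or> ?T i w n = 1" by (rule sbin)
      show "\<And>n. ?T j w n = 0 \<or> ?T j w n = 1" by (rule sbin)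
      show "\<And>k. cW (?T k w) (?T k (?T i w)) (?T k (?T j w))"
        by (rule shiftn_cW[OF w_om xom zom cS_imp_cW[OF four(1)]])
    qed
    thus ?thesis by (simp add: pl_shift)
  qed
  have c2: "cW (?T i ?y) ?y (?T j ?y)"
  proof -
    have "cW (pl (?T i w)) (pl ?y) (pl (?T j w))"
    proof (rule cW_lim)
      show "\<And>n. ?T i w n = 0 \<or> ?T i w n = 1" by (rule sbin)
      show "\<And>n. ?y n = 0 \<or> ?y n = 1" by (rule pl_bin)
      show "\<And>n. ?T j w n = 0 \<or> ?T j w n = 1" by (rule sbin)
      show "\<And>k. cW (?T k (?T i w)) (?T k ?y) (?T k (?T j w))"
        by (rule shiftn_cW[OF xom yom zom cS_imp_cW[OF four(2)]])
    qed
    thus ?thesis by (simp add: pl_shift pl_idem[OF idem])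
  qed
  have "?y = ?T i ?y \<or> ?T i ?y = ?T j ?y \<or> ?y = ?T j ?y" using cW_both[OF c1 c2] .
  moreover have "?y \<noteq> ?T i ?y" using ynevp[unfolded nevp_def, rule_format, of 0 i] i(1) by simp
  moreover have "?y \<noteq> ?T j ?y" using ynevp[unfolded nevp_def, rule_format, of 0 j] j(1) by simp
  moreover have "?T i ?y \<noteq> ?T j ?y"
  proof (cases "i < j")
    case True thus ?thesis using ynevp[unfolded nevp_def, rule_format, of i j] by simp
  next
    case False hence "j < i" using ij by simp
    thus ?thesis using ynevp[unfolded nevp_def, rule_format, of j i] by auto
  qed
  ultimately show False by blast
qed

end

theorem mainTheorem13:
  fixes w :: "nat \<Rightarrow> nat" and p :: "nat set set"
  assumes "sturmian w" and "\<not> singular w" and "idempotent_ultrafilter p"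
  shows "pstar p w = w"
proof -
  have u: "ultrafilter_on_nat p" "ultra_plus p p = p"
    using assms(3) unfolding idempotent_ultrafilter_def by auto
  interpret mainl w p
    by (unfold_locales) (use assms(1,2) u in auto)
  have "pstar p w = pl w" by (rule pstar_eq) (rule bin')
  thus ?thesis using main by simp
qed


end
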